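(* Let $0<a_1<a_2<\cdots<a_n$ be task lengths, $A_i:=a_1+\cdots+a_i$, and for $i\le j$, $A_{i:j}:=\sum_{k=i}^j a_k$. For a permutation $\pi$ of $\{1,\dots,n\}$ let $A_{\pi(i)}:=a_{\pi(1)}+\cdots+a_{\pi(i)}$. Let the disruption intensity be $\lambda(t)=\bar\lambda f(t)$ with $\bar\lambda>0$ and $f$ a positive differentiable function on $[0,\infty)$ with $f_-:=\inf_{t\ge0}f(t)>0$ and $f_+:=\sup_{t\ge0}f(t)<\infty$. Assume $\bar\lambda\le \frac{1}{2f_+a_n}$. (i) Suppose $f$ is strictly decreasing on $[0,A_n]$ and that for every permutation $\pi\neq\mathrm{id}$, $$\bar\lambda<\frac{\sum_{i=1}^n a_{\pi(i)}\int_0^{A_{\pi(i)}}f(s)\,ds-\sum_{i=1}^n a_i\int_0^{A_i}f(s)\,ds}{(f_+)^2A_n\sum_{i=1}^n a_i^2+(f_+)^2\frac34(A_n)^3}.$$ Then SPT is optimal: $M_{1:n}(0)<M_{\pi(1):\pi(n)}(0)$ for every permutation $\pi\ne\mathrm{id}$. (ii) Suppose $f$ is strictly increasing on $[0,A_n]$ and that for every permutation $\pi$ with $(\pi(1),\dots,\pi(n))\neq(n,n-1,\dots,1)$, $$\bar\lambda<\frac{\sum_{i=1}^n a_{\pi(i)}\int_0^{A_{\pi(i)}}f(s)\,ds-\sum_{i=1}^n a_{n+1-i}\int_0^{A_{n+1-i:n}}f(s)\,ds}{(f_+)^2A_n\sum_{i=1}^n a_i^2+(f_+)^2\frac34(A_n)^3}.$$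 Then LPT is optimal: $M_{n:1}(0)<M_{\pi(1):\pi(n)}(0)$ for every such permutation $\pi$.
   Context: Model: a single machine processes a finite batch of tasks one at a time in a fixed order. A task of length $c>0$ requires $c$ units of uninterrupted processing. Disruptions occur at the points of a non-homogeneous Poisson process on $[0,\infty)$ with intensity function $\lambda(t)$. If a disruption occurs while a task is being processed, all work on it is lost and that task is restarted from scratch at the disruption time (no repair time); a task is completed once it has been processed for $c$ consecutive time units with no disruption, and the machine then immediately starts the next task. For a permutation $\pi$ of $\{1,\dots,n\}$, $M_{\pi(1):\pi(n)}(t)$ denotes the expected time, measured from $t$, to complete all tasks in the order $a_{\pi(1)},\dots,a_{\pi(n)}$ when processing of $a_{\pi(1)}$ starts at time $t$; $M_{1:n}$ corresponds to the identity (SPT order, increasing lengths) and $M_{n:1}$ to the order $a_n,\dots,a_1$ (LPT order, decreasing lengths). *)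

theory Defs
  imports "HOL-Probability.Probability"
begin

definition cum_int :: "(real \<Rightarrow> real) \<Rightarrow> real \<Rightarrow> real" where
  "cum_int lam t = integral {0..t} lam"

definition exp_space :: "(nat \<Rightarrow> real) measure" where
  "exp_space = PiM UNIV (\<lambda>_. density lborel (exponential_density 1))"

text \<open>Disruption times of the non-homogeneous Poisson process with intensity lam,
  obtained by the time change of a unit-rate Poisson process with arrival times
  w 0, w 0 + w 1, ...: the points s >= 0 with Lambda(s) equal to some arrival time.\<close>
definition disruptions :: "(real \<Rightarrow> real) \<Rightarrow> (nat \<Rightarrow> real) \<Rightarrow> real set" where
  "disruptions lam w = {s. 0 \<le> s \<and> (\<exists>k. cum_int lam s = (\<Sum>i\<le>k. w i))}"

text \<open>Completion time of one task of length c started at t, given disruption set D: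
  the task is (re)started at t and at each later disruption; it completes at u + c for
  the first (re)start time u with no disruption in (u, u + c).\<close>
definition task_finish :: "real set \<Rightarrow> real \<Rightarrow> real \<Rightarrow> real" where
  "task_finish D t c = Inf {u + c | u. (u = t \<or> (u \<in> D \<and> t < u)) \<and> D \<inter> {u<..<u+c} = {}}"

fun seq_finish :: "real set \<Rightarrow> real \<Rightarrow> real list \<Rightarrow> real" where
  "seq_finish D t [] = t"
| "seq_finish D t (c # cs) = seq_finish D (task_finish D t c) cs"

definition exp_makespan :: "(real \<Rightarrow> real) \<Rightarrow> real list \<Rightarrow> real \<Rightarrow> ennreal" where
  "exp_makespan lam cs t =
     (\<integral>\<^sup>+ w. ennreal (seq_finish (disruptions lam w) t cs - t) \<partial>exp_space)"

definition sched :: "(nat \<Rightarrow> real) \<Rightarrow> nat \<Rightarrow> (nat \<Rightarrow> nat) \<Rightarrow> real list" where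
  "sched a n \<pi> = map (\<lambda>i. a (\<pi> i)) [1..<n+1]"

end

theory Submission
  imports Defs
begin

locale nhpp =
  fixes lam :: "real \<Rightarrow> real" and lm lM :: real
  assumes lam_cont: "continuous_on {0..} lam"
    and lm_pos: "0 < lm"
    and lam_lo: "\<And>t. 0 \<le> t \<Longrightarrow> lm \<le> lam t"
    and lam_hi: "\<And>t. 0 \<le> t \<Longrightarrow> lam t \<le> lM"
begin

definition L :: "real \<Rightarrow> real" where "L t = cum_int lam t"

lemma lm_le_lM: "lm \<le> lM" using lam_lo[of 0] lam_hi[of 0] by simp

lemma lM_pos: "0 < lM" using lm_le_lM lm_pos by simp

lemma lam_int: "0 \<le> x \<Longrightarrow> lam integrable_on {x..y}"
  by (rule integrable_continuous_interval) (rule continuous_on_subset[OF lam_cont], auto)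

lemma L_neg: "t \<le> 0 \<Longrightarrow> L t = 0"
proof (cases "t = 0")
  case True thus ?thesis by (simp add: L_def cum_int_def)
next
  case False
  assume "t \<le> 0" with False have "{0..t} = {}" by auto
  thus ?thesis by (simp add: L_def cum_int_def)
qed

lemma L_diff: assumes "0 \<le> x" "x \<le> y" shows "L y - L x = integral {x..y} lam"
proof -
  have "integral {0..x} lam + integral {x..y} lam = integral {0..y} lam"
    using Henstock_Kurzweil_Integration.integral_combine[where a=0 and c=x and b=y and f=lam] lam_int[of 0 y] assms by auto
  thus ?thesis by (simp add: L_def cum_int_def algebra_simps)
qed

lemma L_diff_bounds0: assumes "0 \<le> x" "x \<le> y"
  shows "lm * (y - x) \<le> L y - L x" "L y - L x \<le> lM * (y - x)"
proof -
  have i: "lam integrable_on {x..y}" using lam_int assms by auto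
  have "integral {x..y} (\<lambda>_. lm) \<le> integral {x..y} lam"
    by (rule integral_le) (use i assms lam_lo in auto)
  thus "lm * (y - x) \<le> L y - L x" using assms by (simp add: L_diff mult.commute)
  have "integral {x..y} lam \<le> integral {x..y} (\<lambda>_. lM)"
    by (rule integral_le) (use i assms lam_hi in auto)
  thus "L y - L x \<le> lM * (y - x)" using assms by (simp add: L_diff mult.commute)
qed

lemma L_nonneg: "0 \<le> L t"
proof (cases "t \<le> 0")
  case True thus ?thesis by (simp add: L_neg)
next
  case False
  have "0 \<le> lm * t" using lm_pos False by simp
  with L_diff_bounds0(1)[of 0 t] False show ?thesis by (simp add: L_neg)
qed

lemma L_mono_le: assumes "x \<le> y" shows "0 \<le> L y - L x" "L y - L x \<le> lM * (y - x)"
proof -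
  have "0 \<le> L y - L x \<and> L y - L x \<le> lM * (y - x)"
  proof (cases "0 \<le> x")
    case True
    with L_diff_bounds0[OF True assms] lm_pos assms show ?thesis
      by (smt (verit) mult_nonneg_nonneg)
  next
    case False
    hence Lx: "L x = 0" by (simp add: L_neg)
    show ?thesis
    proof (cases "0 \<le> y")
      case True
      have "0 \<le> lm * y" "lM * y \<le> lM * (y - x)" using lm_pos lM_pos True False by auto
      with L_diff_bounds0[of 0 y] True show ?thesis
        by (simp add: Lx L_neg)
    next
      case False thus ?thesis using Lx lM_pos assms by (simp add: L_neg)
    qed
  qed
  thus "0 \<le> L y - L x" "L y - L x \<le> lM * (y - x)" by auto
qed

lemma L_mono: "mono L"
  unfolding mono_def using L_mono_le(1) by fastforce

lemma L_lip: "\<bar>L x - L y\<bar> \<le> lM * \<bar>x - y\<bar>"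
  using L_mono_le[of x y] L_mono_le[of y x] by (cases "x \<le> y") (auto simp: abs_if algebra_simps)

lemma L_cont: "continuous_on UNIV L"
proof -
  have "lipschitz_on lM UNIV L"
    by (rule lipschitz_onI) (use L_lip lM_pos in \<open>auto simp: dist_real_def\<close>)
  thus ?thesis by (rule lipschitz_on_continuous_on)
qed

lemma L_meas[measurable]: "L \<in> borel_measurable borel"
  by (rule borel_measurable_mono[OF L_mono])

lemma L_strict: "0 \<le> x \<Longrightarrow> x < y \<Longrightarrow> L x < L y"
  using L_diff_bounds0(1)[of x y] lm_pos by (smt (verit) mult_pos_pos)

lemma L_less_iff: "0 \<le> x \<Longrightarrow> 0 \<le> y \<Longrightarrow> L x < L y \<longleftrightarrow> x < y"
  using L_strict[of x y] L_strict[of y x] by (cases x y rule: linorder_cases) auto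

lemma L_le_iff: "0 \<le> x \<Longrightarrow> 0 \<le> y \<Longrightarrow> L x \<le> L y \<longleftrightarrow> x \<le> y"
  using L_less_iff[of y x] by auto

lemma L_eq_iff: "0 \<le> x \<Longrightarrow> 0 \<le> y \<Longrightarrow> L x = L y \<longleftrightarrow> x = y"
  using L_le_iff[of x y] L_le_iff[of y x] by auto

lemma L_0[simp]: "L 0 = 0" by (simp add: L_neg)

lemma L_surj: assumes "0 \<le> p" shows "\<exists>s. 0 \<le> s \<and> L s = p"
proof -
  have "L (p / lm) \<ge> p"
    using L_diff_bounds0(1)[of 0 "p/lm"] lm_pos assms by (simp add: field_simps)
  moreover have "continuous_on {0..p/lm} L" using L_cont continuous_on_subset by blast
  ultimately show ?thesis
    using IVT'[of L 0 p "p/lm"] assms lm_pos by auto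
qed

definition Li :: "real \<Rightarrow> real" where
  "Li p = (THE s. 0 \<le> s \<and> L s = max 0 p)"

lemma Li_prop: "0 \<le> Li p \<and> L (Li p) = max 0 p"
proof -
  obtain s where s: "0 \<le> s" "L s = max 0 p" using L_surj[of "max 0 p"] by auto
  have "\<exists>!s. 0 \<le> s \<and> L s = max 0 p"
    using s L_eq_iff by (metis)
  thus ?thesis unfolding Li_def by (rule theI')
qed

lemma Li_nonneg: "0 \<le> Li p" using Li_prop by auto

lemma L_Li: "0 \<le> p \<Longrightarrow> L (Li p) = p" using Li_prop[of p] by auto

lemma Li_L: "0 \<le> s \<Longrightarrow> Li (L s) = s"
  using Li_prop[of "L s"] L_nonneg[of s] L_eq_iff[of "Li (L s)" s] by auto

lemma Li_mono: "mono Li"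
proof (rule monoI)
  fix p q :: real assume "p \<le> q"
  hence "L (Li p) \<le> L (Li q)" using Li_prop[of p] Li_prop[of q] by auto
  thus "Li p \<le> Li q" using L_le_iff Li_nonneg by blast
qed

lemma Li_meas[measurable]: "Li \<in> borel_measurable borel"
  by (rule borel_measurable_mono[OF Li_mono])

lemma less_Li_iff: "0 \<le> s \<Longrightarrow> 0 \<le> p \<Longrightarrow> s < Li p \<longleftrightarrow> L s < p"
  using L_less_iff[of s "Li p"] L_Li Li_nonneg by auto

lemma Li_le_iff: "0 \<le> s \<Longrightarrow> 0 \<le> p \<Longrightarrow> Li p \<le> s \<longleftrightarrow> p \<le> L s"
  using less_Li_iff by (meson not_le)

lemma Li_cont: "continuous_on UNIV Li"
proof -
  have "lipschitz_on (1/lm) UNIV Li"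
  proof (rule lipschitz_onI)
    fix p q :: real
    have *: "Li q - Li p \<le> (1/lm) * (q - p)" if "p \<le> q" for p q
    proof -
      have "lm * (Li q - Li p) \<le> L (Li q) - L (Li p)"
        using L_diff_bounds0(1)[of "Li p" "Li q"] Li_nonneg Li_mono that
        by (auto simp: mono_def)
      also have "\<dots> = max 0 q - max 0 p" using Li_prop by simp
      also have "\<dots> \<le> q - p" using that by auto
      finally show ?thesis using lm_pos by (simp add: field_simps)
    qed
    show "dist (Li p) (Li q) \<le> 1 / lm * dist p q"
    proof (cases "p \<le> q")
      case True
      hence "Li p \<le> Li q" using Li_mono by (auto simp: mono_def)
      thus ?thesis using *[OF True] True by (simp add: dist_real_def abs_if)
    next
      case False
      hence "Li q \<le> Li p" using Li_mono by (auto simp: mono_def)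
      thus ?thesis using *[of q p] False by (simp add: dist_real_def abs_if)
    qed
  qed (use lm_pos in auto)
  thus ?thesis by (rule lipschitz_on_continuous_on)
qed

end

abbreviation "M1 \<equiv> density lborel (exponential_density (1::real))"

lemma shift_meas[measurable]:
  "(\<lambda>\<omega>::nat\<Rightarrow>real. \<lambda>i. \<omega> (Suc i)) \<in> measurable (PiM UNIV (\<lambda>_. M1)) (PiM UNIV (\<lambda>_. M1))"
proof (rule measurable_PiM_single')
  fix i :: nat
  show "(\<lambda>\<omega>. \<omega> (Suc i)) \<in> measurable (PiM UNIV (\<lambda>_. M1)) M1" by measurable
qed (auto simp: space_PiM)

context nhpp begin

fun step :: "nat \<Rightarrow> real list \<Rightarrow> real \<Rightarrow> real \<Rightarrow> (nat \<Rightarrow> real) \<Rightarrow> ennreal" where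
  "step N [] t p \<omega> = 0"
| "step N (c#cs) t p \<omega> = (if L (t+c) \<le> p then ennreal c + step N cs (t+c) p \<omega>
     else (case N of 0 \<Rightarrow> 0 | Suc M \<Rightarrow> ennreal (Li p - t) + step M (c#cs) (Li p) (p + \<omega> 0) (\<lambda>i. \<omega> (Suc i))))"

abbreviation "BBS \<equiv> (borel::real measure) \<Otimes>\<^sub>M (borel::real measure) \<Otimes>\<^sub>M exp_space"

lemma step_meas: "(\<lambda>x. step N cs (fst x) (fst (snd x)) (snd (snd x))) \<in> borel_measurable BBS"
proof (induction N arbitrary: cs)
  case 0
  show ?case
  proof (induction cs)
    case Nil thus ?case by simp
  next
    case (Cons c cs)
    have m: "(\<lambda>x. (fst x + c, fst (snd x), snd (snd x))) \<in> measurable BBS BBS"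
      unfolding exp_space_def by measurable
    have 1: "(\<lambda>x. step 0 cs (fst x + c) (fst (snd x)) (snd (snd x))) \<in> borel_measurable BBS"
      using measurable_compose[OF m Cons] by simp
    have 3: "{x \<in> space BBS. L (fst x + c) \<le> fst (snd x)} \<in> sets BBS" by measurable
    note [measurable] = 1
    have 4: "(\<lambda>x. ennreal c + step 0 cs (fst x + c) (fst (snd x)) (snd (snd x))) \<in> borel_measurable BBS"
      by measurable
    show ?case
      unfolding step.simps(2)[of 0 c cs] nat.case(1) by (rule measurable_If[OF 4 measurable_const 3]) simp
  qed
next
  case (Suc M)
  show ?case
  proof (induction cs)
    case Nil thus ?case by simp
  next
    case (Cons c cs)
    have m: "(\<lambda>x. (fst x + c, fst (snd x), snd (snd x))) \<in> measurable BBS BBS"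
      unfolding exp_space_def by measurable
    have 1: "(\<lambda>x. step (Suc M) cs (fst x + c) (fst (snd x)) (snd (snd x))) \<in> borel_measurable BBS"
      using measurable_compose[OF m Cons] by simp
    have m2: "(\<lambda>x. (Li (fst (snd x)), fst (snd x) + snd (snd x) 0, \<lambda>i. snd (snd x) (Suc i))) \<in> measurable BBS BBS"
      unfolding exp_space_def by measurable
    have 2: "(\<lambda>x. step M (c#cs) (Li (fst (snd x))) (fst (snd x) + snd (snd x) 0) (\<lambda>i. snd (snd x) (Suc i))) \<in> borel_measurable BBS"
      using measurable_compose[OF m2 Suc.IH[of "c#cs"]] by simp
    have 3: "{x \<in> space BBS. L (fst x + c) \<le> fst (snd x)} \<in> sets BBS" by measurable
    note [measurable] = 1 2
    have 4: "(\<lambda>x. ennreal c + step (Suc M) cs (fst x + c) (fst (snd x)) (snd (snd x))) \<in> borel_measurable BBS"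
      by measurable
    have 5: "(\<lambda>x. ennreal (Li (fst (snd x)) - fst x) + step M (c#cs) (Li (fst (snd x))) (fst (snd x) + snd (snd x) 0) (\<lambda>i. snd (snd x) (Suc i))) \<in> borel_measurable BBS"
      by measurable
    show ?case
      unfolding step.simps(2)[of "Suc M" c cs] nat.case(2) by (rule measurable_If[OF 4 5 3])
  qed
qed

end

lemma prob_M1: "prob_space M1" by (rule prob_space_exponential_density) simp

interpretation ES: sequence_space M1
  by (simp add: sequence_space_def product_prob_space_def product_sigma_finite_def
       product_prob_space_axioms_def prob_M1 prob_space_imp_sigma_finite)

lemma exp_space_eq: "exp_space = ES.S" by (simp add: exp_space_def)

lemma translate_nn: fixes f :: "real \<Rightarrow> ennreal"
  assumes "f \<in> borel_measurable borel"
  shows "(\<integral>\<^sup>+ s. f s \<partial>lborel) = (\<integral>\<^sup>+ x. f (d + x) \<partial>lborel)"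
proof -
  have "(\<integral>\<^sup>+ s. f s \<partial>lborel) = (\<integral>\<^sup>+ s. f s \<partial>(distr lborel borel ((+) d)))"
    by (simp add: lborel_distr_plus)
  also have "\<dots> = (\<integral>\<^sup>+ x. f (d + x) \<partial>lborel)"
    by (rule nn_integral_distr) (use assms in auto)
  finally show ?thesis .
qed

context nhpp begin

definition W :: "nat \<Rightarrow> real list \<Rightarrow> real \<Rightarrow> real \<Rightarrow> ennreal" where
  "W N cs t p = (\<integral>\<^sup>+ \<omega>. step N cs t p \<omega> \<partial>exp_space)"

definition V :: "nat \<Rightarrow> real list \<Rightarrow> real \<Rightarrow> ennreal" where
  "V N cs t = (\<integral>\<^sup>+ \<omega>. step N cs t (L t + \<omega> 0) (\<lambda>i. \<omega> (Suc i)) \<partial>exp_space)"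

lemma step_meas2[measurable]: "(\<lambda>(p, \<omega>). step N cs t p \<omega>) \<in> borel_measurable (borel \<Otimes>\<^sub>M exp_space)"
proof -
  have m: "(\<lambda>x. (t, fst x, snd x)) \<in> measurable (borel \<Otimes>\<^sub>M exp_space) BBS" by measurable
  show ?thesis using measurable_compose[OF m step_meas[of N cs]] by (simp add: case_prod_beta)
qed

lemma W_meas[measurable]: "(\<lambda>p. W N cs t p) \<in> borel_measurable borel"
  unfolding W_def exp_space_eq
  by (rule ES.borel_measurable_nn_integral) (use step_meas2[of N cs t] in \<open>simp add: exp_space_eq\<close>)

lemma V_split: "V N cs t = (\<integral>\<^sup>+ s. ennreal (exponential_density 1 s) * W N cs t (L t + s) \<partial>lborel)"
proof -
  let ?g = "\<lambda>\<omega>. step N cs t (L t + \<omega> 0) (\<lambda>i. \<omega> (Suc i))"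
  have gm: "?g \<in> borel_measurable ES.S"
  proof -
    have m: "(\<lambda>\<omega>. (t, L t + \<omega> 0, \<lambda>i. \<omega> (Suc i))) \<in> measurable ES.S BBS"
      unfolding exp_space_eq by measurable
    show ?thesis using measurable_compose[OF m step_meas[of N cs]] by simp
  qed
  have "V N cs t = (\<integral>\<^sup>+ \<omega>. ?g \<omega> \<partial>distr (M1 \<Otimes>\<^sub>M ES.S) ES.S (\<lambda>(s, \<omega>). case_nat s \<omega>))"
    unfolding V_def exp_space_eq ES.PiM_iter ..
  also have "\<dots> = (\<integral>\<^sup>+ x. ?g (case_nat (fst x) (snd x)) \<partial>(M1 \<Otimes>\<^sub>M ES.S))"
    by (subst nn_integral_distr) (use gm in \<open>auto simp: case_prod_beta\<close>)
  also have "\<dots> = (\<integral>\<^sup>+ x. step N cs t (L t + fst x) (snd x) \<partial>(M1 \<Otimes>\<^sub>M ES.S))"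
    by (simp add: case_nat_def)
  also have "\<dots> = (\<integral>\<^sup>+ s. \<integral>\<^sup>+ \<omega>. step N cs t (L t + s) \<omega> \<partial>ES.S \<partial>M1)"
  proof -
    have m: "(\<lambda>x. (t, L t + fst x, snd x)) \<in> measurable (M1 \<Otimes>\<^sub>M ES.S) BBS"
      unfolding exp_space_eq by measurable
    have "(\<lambda>x. step N cs t (L t + fst x) (snd x)) \<in> borel_measurable (M1 \<Otimes>\<^sub>M ES.S)"
      using measurable_compose[OF m step_meas[of N cs]] by simp
    from ES.nn_integral_fst[OF this] show ?thesis by simp
  qed
  also have "\<dots> = (\<integral>\<^sup>+ s. W N cs t (L t + s) \<partial>M1)"
    by (simp add: W_def exp_space_eq)
  also have "\<dots> = (\<integral>\<^sup>+ s. ennreal (exponential_density 1 s) * W N cs t (L t + s) \<partial>lborel)"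
  proof (rule nn_integral_density)
    have "(\<lambda>s. L t + s) \<in> borel_measurable borel" by measurable
    from measurable_compose[OF this W_meas]
    show "(\<lambda>s. W N cs t (L t + s)) \<in> borel_measurable lborel" by simp
  qed auto
  finally show ?thesis .
qed

lemma step_fin: "L (t+c) \<le> p \<Longrightarrow> step N (c#cs) t p \<omega> = ennreal c + step N cs (t+c) p \<omega>"
  by (simp del: step.simps add: step.simps(2)[of N c cs t p \<omega>])

lemma step_restart: "\<not> L (t+c) \<le> p \<Longrightarrow> step (Suc M) (c#cs) t p \<omega> =
   ennreal (Li p - t) + step M (c#cs) (Li p) (p + \<omega> 0) (\<lambda>i. \<omega> (Suc i))"
  by (simp del: step.simps add: step.simps(2)[of "Suc M" c cs t p \<omega>])

lemma step_zero: "\<not> L (t+c) \<le> p \<Longrightarrow> step 0 (c#cs) t p \<omega> = 0"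
  by (simp del: step.simps add: step.simps(2)[of 0 c cs t p \<omega>])

declare step.simps(2)[simp del]

lemma step_meas3[measurable]: "(\<lambda>\<omega>. step N cs t p \<omega>) \<in> borel_measurable exp_space"
proof -
  have m: "(\<lambda>\<omega>. (t, p, \<omega>)) \<in> measurable exp_space BBS" by measurable
  show ?thesis using measurable_compose[OF m step_meas[of N cs]] by simp
qed

lemma V_meas[measurable]: "(\<lambda>t. V N cs t) \<in> borel_measurable borel"
proof -
  have m: "(\<lambda>x. (fst x, L (fst x) + snd x 0, \<lambda>i. snd x (Suc i))) \<in> measurable (borel \<Otimes>\<^sub>M exp_space) BBS"
    unfolding exp_space_def by measurable
  have "(\<lambda>(t, \<omega>). step N cs t (L t + \<omega> 0) (\<lambda>i. \<omega> (Suc i))) \<in> borel_measurable (borel \<Otimes>\<^sub>M ES.S)"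
    using measurable_compose[OF m step_meas[of N cs]] by (simp add: case_prod_beta exp_space_eq)
  from ES.borel_measurable_nn_integral[OF this] show ?thesis unfolding V_def exp_space_eq .
qed

lemma W_fin: "L (t+c) \<le> p \<Longrightarrow> W N (c#cs) t p = ennreal c + W N cs (t+c) p"
proof -
  assume a: "L (t+c) \<le> p"
  have "W N (c#cs) t p = (\<integral>\<^sup>+ \<omega>. ennreal c + step N cs (t+c) p \<omega> \<partial>exp_space)"
    unfolding W_def by (intro nn_integral_cong) (use a in \<open>simp add: step_fin\<close>)
  also have "\<dots> = (\<integral>\<^sup>+ \<omega>. ennreal c \<partial>exp_space) + W N cs (t+c) p"
    unfolding W_def by (rule nn_integral_add) auto
  also have "(\<integral>\<^sup>+ \<omega>. ennreal c \<partial>exp_space) = ennreal c"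
    by (simp add: exp_space_eq ES.emeasure_space_1)
  finally show ?thesis .
qed

lemma W_restart: "p < L (t+c) \<Longrightarrow> 0 \<le> p \<Longrightarrow>
    W (Suc M) (c#cs) t p = ennreal (Li p - t) + V M (c#cs) (Li p)"
proof -
  assume a: "p < L (t+c)" "0 \<le> p"
  have "W (Suc M) (c#cs) t p = (\<integral>\<^sup>+ \<omega>. ennreal (Li p - t) + step M (c#cs) (Li p) (p + \<omega> 0) (\<lambda>i. \<omega> (Suc i)) \<partial>exp_space)"
    unfolding W_def by (intro nn_integral_cong) (use a in \<open>simp add: step_restart\<close>)
  also have "\<dots> = (\<integral>\<^sup>+ \<omega>. ennreal (Li p - t) \<partial>exp_space) + (\<integral>\<^sup>+ \<omega>. step M (c#cs) (Li p) (p + \<omega> 0) (\<lambda>i. \<omega> (Suc i)) \<partial>exp_space)"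
  proof (rule nn_integral_add)
    have m: "(\<lambda>\<omega>. (Li p, p + \<omega> 0, \<lambda>i. \<omega> (Suc i))) \<in> measurable exp_space BBS"
      unfolding exp_space_def by measurable
    show "(\<lambda>\<omega>. step M (c#cs) (Li p) (p + \<omega> 0) (\<lambda>i. \<omega> (Suc i))) \<in> borel_measurable exp_space"
      using measurable_compose[OF m step_meas[of M "c#cs"]] by simp
  qed auto
  also have "(\<integral>\<^sup>+ \<omega>. ennreal (Li p - t) \<partial>exp_space) = ennreal (Li p - t)"
    by (simp add: exp_space_eq ES.emeasure_space_1)
  also have "(\<integral>\<^sup>+ \<omega>. step M (c#cs) (Li p) (p + \<omega> 0) (\<lambda>i. \<omega> (Suc i)) \<partial>exp_space) = V M (c#cs) (Li p)"
    unfolding V_def using L_Li[OF a(2)] by simp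
  finally show ?thesis .
qed

lemma W_zero: "p < L (t+c) \<Longrightarrow> W 0 (c#cs) t p = 0"
  unfolding W_def by (subst nn_integral_cong[where v="\<lambda>_. 0"]) (simp_all add: step_zero)

lemma nn_dens_1: "(\<integral>\<^sup>+ x. ennreal (exponential_density 1 x) \<partial>lborel) = 1"
proof -
  have "emeasure M1 (space M1) = 1" using prob_space.emeasure_space_1[OF prob_M1] .
  thus ?thesis by (simp add: emeasure_density)
qed

lemma V_rec: assumes t: "0 \<le> t" and c: "0 \<le> c"
  shows "V N (c#cs) t = (\<integral>\<^sup>+ s. indicator {0..<L(t+c) - L t} s * ennreal (exp (-s)) *
      (case N of 0 \<Rightarrow> 0 | Suc M \<Rightarrow> ennreal (Li (L t + s) - t) + V M (c#cs) (Li (L t + s))) \<partial>lborel)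
    + ennreal (exp (-(L(t+c) - L t))) * (ennreal c + V N cs (t+c))"
proof -
  define d where "d = L(t+c) - L t"
  have d0: "0 \<le> d" unfolding d_def using L_mono_le(1)[of t "t+c"] c by simp
  define R where "R s = (case N of 0 \<Rightarrow> 0 | Suc M \<Rightarrow> ennreal (Li (L t + s) - t) + V M (c#cs) (Li (L t + s)))" for s
  have Rm: "R \<in> borel_measurable borel"
  proof (cases N)
    case 0 thus ?thesis unfolding R_def by simp
  next
    case (Suc M)
    have "(\<lambda>s. Li (L t + s)) \<in> borel_measurable borel" by measurable
    from measurable_compose[OF this V_meas[of M "c#cs"]]
    have "(\<lambda>s. V M (c#cs) (Li (L t + s))) \<in> borel_measurable borel" .
    thus ?thesis unfolding R_def Suc by measurable
  qed
  have Wm: "(\<lambda>s. W N cs (t+c) (L t + s)) \<in> borel_measurable borel"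
  proof -
    have "(\<lambda>s. L t + s) \<in> borel_measurable borel" by measurable
    from measurable_compose[OF this W_meas] show ?thesis by simp
  qed
  have pw: "ennreal (exponential_density 1 s) * W N (c#cs) t (L t + s) =
      indicator {0..<d} s * ennreal (exp (-s)) * R s +
      indicator {d..} s * ennreal (exponential_density 1 s) * (ennreal c + W N cs (t+c) (L t + s))" for s
  proof (cases "s < 0")
    case True thus ?thesis using d0 by (simp add: exponential_density_def indicator_def)
  next
    case False
    show ?thesis
    proof (cases "s < d")
      case True
      hence lt: "L t + s < L (t+c)" unfolding d_def by simp
      have "W N (c#cs) t (L t + s) = R s"
      proof (cases N)
        case 0 thus ?thesis using W_zero[OF lt] by (simp add: R_def)
      next
        case (Suc M) thus ?thesis using W_restart[OF lt] L_nonneg[of t] False by (simp add: R_def)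
      qed
      thus ?thesis using True False by (simp add: exponential_density_def indicator_def)
    next
      case False2: False
      hence "L (t+c) \<le> L t + s" unfolding d_def by simp
      from W_fin[OF this] show ?thesis using False False2 by (simp add: indicator_def)
    qed
  qed
  have "V N (c#cs) t = (\<integral>\<^sup>+ s. indicator {0..<d} s * ennreal (exp (-s)) * R s +
      indicator {d..} s * ennreal (exponential_density 1 s) * (ennreal c + W N cs (t+c) (L t + s)) \<partial>lborel)"
    unfolding V_split pw ..
  also have "\<dots> = (\<integral>\<^sup>+ s. indicator {0..<d} s * ennreal (exp (-s)) * R s \<partial>lborel) +
      (\<integral>\<^sup>+ s. indicator {d..} s * ennreal (exponential_density 1 s) * (ennreal c + W N cs (t+c) (L t + s)) \<partial>lborel)"
    by (rule nn_integral_add) (use Rm Wm in auto)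
  also have "(\<integral>\<^sup>+ s. indicator {d..} s * ennreal (exponential_density 1 s) * (ennreal c + W N cs (t+c) (L t + s)) \<partial>lborel)
      = (\<integral>\<^sup>+ x. indicator {d..} (d + x) * ennreal (exponential_density 1 (d + x)) * (ennreal c + W N cs (t+c) (L t + (d + x))) \<partial>lborel)"
    by (rule translate_nn) (use Wm in auto)
  also have "\<dots> = (\<integral>\<^sup>+ x. ennreal (exp (-d)) * (ennreal (exponential_density 1 x) * ennreal c + ennreal (exponential_density 1 x) * W N cs (t+c) (L (t+c) + x)) \<partial>lborel)"
  proof (rule nn_integral_cong)
    fix x :: real
    have e: "W N cs (t+c) (L t + (d + x)) = W N cs (t+c) (L (t+c) + x)" unfolding d_def by (simp add: algebra_simps)
    show "indicator {d..} (d + x) * ennreal (exponential_density 1 (d + x)) * (ennreal c + W N cs (t+c) (L t + (d + x))) =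
      ennreal (exp (-d)) * (ennreal (exponential_density 1 x) * ennreal c + ennreal (exponential_density 1 x) * W N cs (t+c) (L (t+c) + x))"
    proof (cases "x < 0")
      case True thus ?thesis by (simp add: indicator_def exponential_density_def)
    next
      case False
      hence "exponential_density 1 (d + x) = exp (-d) * exponential_density 1 x"
        using d0 by (simp add: exponential_density_def exp_add[symmetric])
      hence "ennreal (exponential_density 1 (d + x)) = ennreal (exp (-d)) * ennreal (exponential_density 1 x)"
        by (simp add: ennreal_mult exponential_density_nonneg)
      thus ?thesis using False d0 e
        by (simp add: indicator_def distrib_left mult.assoc)
    qed
  qed
  also have "\<dots> = ennreal (exp (-d)) * ((\<integral>\<^sup>+ x. ennreal (exponential_density 1 x) * ennreal c \<partial>lborel) + (\<integral>\<^sup>+ x. ennreal (exponential_density 1 x) * W N cs (t+c) (L (t+c) + x) \<partial>lborel))"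
  proof -
    have "(\<lambda>x. W N cs (t+c) (L (t+c) + x)) \<in> borel_measurable borel"
    proof -
      have "(\<lambda>s. L (t+c) + s) \<in> borel_measurable borel" by measurable
      from measurable_compose[OF this W_meas] show ?thesis by simp
    qed
    thus ?thesis by (subst nn_integral_cmult) (auto intro!: arg_cong2[where f="(*)"] nn_integral_add)
  qed
  also have "(\<integral>\<^sup>+ x. ennreal (exponential_density 1 x) * ennreal c \<partial>lborel) = ennreal c"
    by (subst nn_integral_multc) (auto simp: nn_dens_1)
  also have "(\<integral>\<^sup>+ x. ennreal (exponential_density 1 x) * W N cs (t+c) (L (t+c) + x) \<partial>lborel) = V N cs (t+c)"
    by (simp add: V_split)
  finally show ?thesis unfolding d_def R_def .
qed

end

lemma lin_integral: fixes K c :: real assumes "0 \<le> c"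
  shows "((\<lambda>u. K * (c - u)) has_integral K * c^2 / 2) {0..c}"
proof -
  have "((\<lambda>u. K * (c - u)) has_integral ((\<lambda>u. K * (c * u - u^2/2)) c - (\<lambda>u. K * (c * u - u^2/2)) 0)) {0..c}"
  proof (rule fundamental_theorem_of_calculus)
    fix x :: real assume "x \<in> {0..c}"
    have "((\<lambda>u. K * (c * u - u^2/2)) has_real_derivative K * (c - x)) (at x within {0..c})"
      by (auto intro!: derivative_eq_intros simp: algebra_simps)
    thus "((\<lambda>u. K * (c * u - u^2/2)) has_vector_derivative K * (c - x)) (at x within {0..c})"
      by (simp add: has_real_derivative_iff_has_vector_derivative)
  qed (use assms in auto)
  thus ?thesis by (simp add: power2_eq_square algebra_simps)
qed

context nhpp begin

lemma L_cont': "continuous_on S f \<Longrightarrow> continuous_on S (\<lambda>x. L (f x))"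
  using continuous_on_compose2[OF L_cont] by blast

definition phi :: "real \<Rightarrow> real \<Rightarrow> real" where
  "phi c t = integral {0..c} (\<lambda>u. L (t+c) - L (t+u))"

lemma phi_int: "(\<lambda>u. L (t+c) - L (t+u)) integrable_on {0..c}"
  by (rule integrable_continuous_interval) (auto intro!: continuous_intros L_cont')

lemma phi_has: "((\<lambda>u. L (t+c) - L (t+u)) has_integral phi c t) {0..c}"
  unfolding phi_def using phi_int by (rule integrable_integral)

lemma phi_nonneg: "0 \<le> phi c t"
  unfolding phi_def
  by (rule integral_nonneg[OF phi_int]) (use L_mono_le(1) in auto)

lemma phi_le: assumes "0 \<le> c" shows "phi c t \<le> lM * c^2 / 2"
proof -
  have "phi c t \<le> integral {0..c} (\<lambda>u. lM * (c - u))"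
    unfolding phi_def
  proof (rule integral_le[OF phi_int])
    show "(\<lambda>u. lM * (c - u)) integrable_on {0..c}" using lin_integral[OF assms] by blast
    fix u assume "u \<in> {0..c}"
    thus "L (t+c) - L (t+u) \<le> lM * (c - u)" using L_mono_le(2)[of "t+u" "t+c"] by simp
  qed
  also have "\<dots> = lM * c^2 / 2" using lin_integral[OF assms] by (rule integral_unique)
  finally show ?thesis .
qed

lemma phi_lip: assumes "0 \<le> c" shows "\<bar>phi c x - phi c y\<bar> \<le> lM * c * \<bar>x - y\<bar>"
proof -
  let ?g = "\<lambda>u. (L (x+c) - L (x+u)) - (L (y+c) - L (y+u))"
  have gi: "?g integrable_on {0..c}" using phi_int[of x c] phi_int[of y c] by (rule integrable_diff)
  have eq: "phi c x - phi c y = integral {0..c} ?g"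
    unfolding phi_def by (rule integral_diff[symmetric]) (rule phi_int)+
  have b: "\<bar>?g u\<bar> \<le> lM * \<bar>x - y\<bar>" for u
  proof (cases "x \<le> y")
    case True
    have "0 \<le> L (y+c) - L (x+c)" "L (y+c) - L (x+c) \<le> lM * (y - x)"
         "0 \<le> L (y+u) - L (x+u)" "L (y+u) - L (x+u) \<le> lM * (y - x)"
      using L_mono_le[of "x+c" "y+c"] L_mono_le[of "x+u" "y+u"] True by auto
    thus ?thesis using True by (auto simp: abs_if)
  next
    case False
    have "0 \<le> L (x+c) - L (y+c)" "L (x+c) - L (y+c) \<le> lM * (x - y)"
         "0 \<le> L (x+u) - L (y+u)" "L (x+u) - L (y+u) \<le> lM * (x - y)"
      using L_mono_le[of "y+c" "x+c"] L_mono_le[of "y+u" "x+u"] False by auto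
    thus ?thesis using False by (auto simp: abs_if)
  qed
  have "integral {0..c} ?g \<le> integral {0..c} (\<lambda>_. lM * \<bar>x - y\<bar>)"
  proof (rule integral_le[OF gi])
    fix u show "?g u \<le> lM * \<bar>x - y\<bar>" using b[of u] by linarith
  qed auto
  moreover have "integral {0..c} (\<lambda>_. - (lM * \<bar>x - y\<bar>)) \<le> integral {0..c} ?g"
  proof (rule integral_le[OF _ gi])
    fix u show "- (lM * \<bar>x - y\<bar>) \<le> ?g u" using b[of u] by linarith
  qed auto
  moreover have "integral {0..c} (\<lambda>_. lM * \<bar>x - y\<bar>) = lM * c * \<bar>x - y\<bar>"
    "integral {0..c} (\<lambda>_. - (lM * \<bar>x - y\<bar>)) = - (lM * c * \<bar>x - y\<bar>)" using assms by auto
  ultimately have "integral {0..c} ?g \<le> lM * c * \<bar>x - y\<bar>" "- (lM * c * \<bar>x - y\<bar>) \<le> integral {0..c} ?g"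
    by linarith+
  thus ?thesis unfolding eq abs_le_iff by linarith
qed

lemma phi_cont: assumes "0 \<le> c" shows "continuous_on UNIV (phi c)"
proof -
  have "lipschitz_on (lM * c) UNIV (phi c)"
    by (rule lipschitz_onI) (use phi_lip[OF assms] lM_pos assms in \<open>auto simp: dist_real_def\<close>)
  thus ?thesis by (rule lipschitz_on_continuous_on)
qed

fun Phi :: "real list \<Rightarrow> real \<Rightarrow> real" where
  "Phi [] t = 0"
| "Phi (c#cs) t = c + phi c t + Phi cs (t + c)"

definition Q :: "real list \<Rightarrow> real" where "Q cs = sum_list (map (\<lambda>c. c^2) cs)"

lemma Q_simps[simp]: "Q [] = 0" "Q (c#cs) = c^2 + Q cs" by (simp_all add: Q_def)

lemma Q_nonneg: "0 \<le> Q cs" unfolding Q_def by (induction cs) auto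

lemma Phi_lip: "\<forall>c\<in>set cs. 0 \<le> c \<Longrightarrow> \<bar>Phi cs x - Phi cs y\<bar> \<le> lM * sum_list cs * \<bar>x - y\<bar>"
proof (induction cs arbitrary: x y)
  case Nil thus ?case by simp
next
  case (Cons c cs)
  have 1: "\<bar>phi c x - phi c y\<bar> \<le> lM * c * \<bar>x - y\<bar>" using phi_lip Cons.prems by auto
  have 2: "\<bar>Phi cs (x+c) - Phi cs (y+c)\<bar> \<le> lM * sum_list cs * \<bar>x - y\<bar>"
    using Cons.IH[of "x+c" "y+c"] Cons.prems by auto
  have "\<bar>Phi (c#cs) x - Phi (c#cs) y\<bar> \<le> \<bar>phi c x - phi c y\<bar> + \<bar>Phi cs (x+c) - Phi cs (y+c)\<bar>"
    by simp
  also have "\<dots> \<le> lM * (c + sum_list cs) * \<bar>x - y\<bar>" using 1 2 by (simp add: algebra_simps)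
  finally show ?case by simp
qed

lemma Phi_bounds: "\<forall>c\<in>set cs. 0 \<le> c \<Longrightarrow> 0 \<le> Phi cs t \<and> Phi cs t \<le> sum_list cs + lM * Q cs / 2"
proof (induction cs arbitrary: t)
  case Nil thus ?case by simp
next
  case (Cons c cs)
  have e: "lM * (c^2 + Q cs) / 2 = lM * c^2 / 2 + lM * Q cs / 2" by (simp add: algebra_simps)
  have "0 \<le> c" using Cons.prems by auto
  have i: "0 \<le> Phi cs (t+c) \<and> Phi cs (t+c) \<le> sum_list cs + lM * Q cs / 2" using Cons.IH[of "t+c"] Cons.prems by auto
  have "phi c t \<le> lM * c^2 / 2" using phi_le \<open>0 \<le> c\<close> by auto
  hence "Phi (c#cs) t \<le> c + sum_list cs + (lM * c^2 / 2 + lM * Q cs / 2)" using i by simp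
  moreover have "0 \<le> Phi (c#cs) t" using i phi_nonneg[of c t] \<open>0 \<le> c\<close> by simp
  ultimately show ?case by (simp only: e sum_list.Cons Q_simps)
qed

lemma Phi_cont: assumes "\<forall>c\<in>set cs. 0 \<le> c" shows "continuous_on UNIV (Phi cs)"
proof -
  have "0 \<le> sum_list cs" using assms by (induction cs) auto
  hence "lipschitz_on (lM * sum_list cs) UNIV (Phi cs)"
    by (intro lipschitz_onI) (use Phi_lip[OF assms] lM_pos in \<open>auto simp: dist_real_def\<close>)
  thus ?thesis by (rule lipschitz_on_continuous_on)
qed

lemma Phi_meas: "\<forall>c\<in>set cs. 0 \<le> c \<Longrightarrow> Phi cs \<in> borel_measurable borel"
  using Phi_cont borel_measurable_continuous_onI by blast

lemma phi_meas: "0 \<le> c \<Longrightarrow> phi c \<in> borel_measurable borel"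
  using phi_cont borel_measurable_continuous_onI by blast

end

context nhpp begin

lemma Li_ge: assumes "0 \<le> t" "0 \<le> s" shows "t \<le> Li (L t + s)"
  using Li_le_iff[of t "L t + s"] L_nonneg[of t] assms Li_mono
  by (metis Li_L add_increasing2 le_add_same_cancel1 monoD)

lemma sigma_area: assumes t: "0 \<le> t" and c: "0 \<le> c"
  shows "(\<integral>\<^sup>+ s. ennreal ((Li (L t + s) - t) * indicator {0..L(t+c) - L t} s) \<partial>lborel) = ennreal (phi c t)"
proof -
  define d where "d = L(t+c) - L t"
  have d0: "0 \<le> d" unfolding d_def using L_mono_le(1)[of t "t+c"] c by simp
  define f :: "real \<times> real \<Rightarrow> ennreal" where
    "f x = (if 0 \<le> fst x \<and> fst x \<le> d \<and> 0 \<le> snd x \<and> snd x \<le> c \<and> L (t + snd x) < L t + fst x then 1 else 0)" for x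
  have fm: "f \<in> borel_measurable (lborel \<Otimes>\<^sub>M lborel)"
    unfolding f_def by measurable
  have inner_u: "(\<integral>\<^sup>+ u. f (s, u) \<partial>lborel) = ennreal ((Li (L t + s) - t) * indicator {0..d} s)" for s
  proof (cases "0 \<le> s \<and> s \<le> d")
    case True
    define \<sigma> where "\<sigma> = Li (L t + s)"
    have Ls: "L \<sigma> = L t + s" unfolding \<sigma>_def using L_Li[of "L t + s"] L_nonneg[of t] True by simp
    have s0: "0 \<le> \<sigma>" unfolding \<sigma>_def by (rule Li_nonneg)
    have st: "t \<le> \<sigma>" unfolding \<sigma>_def using Li_ge t True by auto
    have sc: "\<sigma> \<le> t + c"
      using Ls True L_le_iff[of \<sigma> "t+c"] s0 t c unfolding d_def by simp
    have "f (s, u) = indicator {0..<\<sigma> - t} u" for u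
    proof -
      have "0 \<le> u \<Longrightarrow> (L (t+u) < L t + s \<longleftrightarrow> u < \<sigma> - t)"
        using L_less_iff[of "t+u" \<sigma>] Ls s0 t by auto
      thus ?thesis unfolding f_def using True sc by (auto simp: indicator_def)
    qed
    hence "(\<integral>\<^sup>+ u. f (s, u) \<partial>lborel) = emeasure lborel {0..<\<sigma> - t}" by simp
    also have "\<dots> = ennreal (\<sigma> - t)" using st by simp
    finally show ?thesis using True unfolding \<sigma>_def by simp
  next
    case False
    hence "f (s, u) = 0" for u unfolding f_def by auto
    moreover have "indicator {0..d} s = (0::real)" using False by (auto simp: indicator_def)
    ultimately show ?thesis by simp
  qed
  have inner_s: "(\<integral>\<^sup>+ s. f (s, u) \<partial>lborel) = ennreal (indicator {0..c} u * (L (t+c) - L (t+u)))" for u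
  proof (cases "0 \<le> u \<and> u \<le> c")
    case True
    have a: "0 \<le> L (t+u) - L t" using L_mono_le(1)[of t "t+u"] True by simp
    have b: "L (t+u) - L t \<le> d" unfolding d_def using L_mono_le(1)[of "t+u" "t+c"] True by simp
    have "f (s, u) = indicator {L (t+u) - L t<..d} s" for s
      unfolding f_def using True a by (auto simp: indicator_def)
    hence "(\<integral>\<^sup>+ s. f (s, u) \<partial>lborel) = emeasure lborel {L (t+u) - L t<..d}" by simp
    also have "\<dots> = ennreal (L (t+c) - L (t+u))" using b unfolding d_def by simp
    finally show ?thesis using True by simp
  next
    case False
    hence "f (s, u) = 0" for s unfolding f_def by auto
    moreover have "indicator {0..c} u = (0::real)" using False by (auto simp: indicator_def)
    ultimately show ?thesis by simp
  qed
  have "(\<integral>\<^sup>+ s. ennreal ((Li (L t + s) - t) * indicator {0..d} s) \<partial>lborel) = (\<integral>\<^sup>+ s. \<integral>\<^sup>+ u. f (s, u) \<partial>lborel \<partial>lborel)"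
    by (simp add: inner_u)
  also have "\<dots> = (\<integral>\<^sup>+ u. \<integral>\<^sup>+ s. f (s, u) \<partial>lborel \<partial>lborel)"
    by (rule lborel_pair.Fubini[OF fm, symmetric])
  also have "\<dots> = (\<integral>\<^sup>+ u. ennreal (indicator {0..c} u * (L (t+c) - L (t+u))) \<partial>lborel)"
    by (simp add: inner_s)
  also have "\<dots> = ennreal (phi c t)"
    by (rule nn_integral_has_integral_lebesgue) (use phi_has L_mono_le(1) in auto)
  finally show ?thesis unfolding d_def .
qed

end

lemma exp_integral: fixes d :: real assumes "0 \<le> d"
  shows "(\<integral>\<^sup>+ s. ennreal (indicator {0..d} s * exp (-s)) \<partial>lborel) = ennreal (1 - exp (-d))"
proof -
  have "((\<lambda>s. exp (-s)) has_integral ((\<lambda>s. - exp (-s)) d - (\<lambda>s. - exp (-s)) 0)) {0..d}"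
  proof (rule fundamental_theorem_of_calculus)
    fix x :: real assume "x \<in> {0..d}"
    have "((\<lambda>s. - exp (-s)) has_real_derivative exp (-x)) (at x within {0..d})"
      by (auto intro!: derivative_eq_intros)
    thus "((\<lambda>s. - exp (-s)) has_vector_derivative exp (-x)) (at x within {0..d})"
      by (simp add: has_real_derivative_iff_has_vector_derivative)
  qed (use assms in auto)
  hence "((\<lambda>s. exp (-s)) has_integral (1 - exp (-d))) {0..d}" by simp
  thus ?thesis by (rule nn_integral_has_integral_lebesgue[rotated]) auto
qed

lemma one_minus_exp_le: "0 \<le> d \<Longrightarrow> 1 - exp (-d) \<le> (d::real)"
  using exp_ge_add_one_self[of "-d"] by simp

context nhpp begin

definition kap :: real where "kap = exp (1/2) * lM^2 / 2"

definition okl :: "real list \<Rightarrow> real \<Rightarrow> bool" where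
  "okl cs T \<longleftrightarrow> (\<forall>c\<in>set cs. 0 < c \<and> lM * c \<le> 1/2) \<and> sum_list cs \<le> T"

lemma sum_list_nonneg_okl: "\<forall>c\<in>set cs. 0 < c \<and> lM * c \<le> 1/2 \<Longrightarrow> 0 \<le> sum_list cs"
  by (induction cs) auto

lemma okl_Cons: "okl (c#cs) T \<Longrightarrow> okl cs T \<and> 0 < c \<and> lM * c \<le> 1/2 \<and> c + sum_list cs \<le> T"
  unfolding okl_def using sum_list_nonneg_okl[of cs] by auto

definition U :: "real list \<Rightarrow> real \<Rightarrow> real \<Rightarrow> real" where
  "U cs T t = Phi cs t + kap * T * Q cs"

lemma key_up:
  fixes c S T d ph :: real
  assumes c: "0 < c" "lM * c \<le> 1/2" and S: "0 \<le> S" and T: "c + S \<le> T"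
    and d: "0 \<le> d" "d \<le> lM * c" and ph: "0 \<le> ph" "ph \<le> lM * c^2 / 2"
  shows "lM * S * ph + (1 - exp (-d)) * (lM * c^2 / 2) \<le> exp (-d) * (kap * T * c^2)"
proof -
  have l0: "0 \<le> lM" using lM_pos by simp
  have "lM * S * ph \<le> lM * S * (lM * c^2 / 2)"
    using ph l0 S by (intro mult_left_mono) auto
  moreover have "(1 - exp (-d)) * (lM * c^2 / 2) \<le> (lM * c) * (lM * c^2 / 2)"
    using one_minus_exp_le[OF d(1)] d l0 by (intro mult_right_mono) auto
  moreover have "lM * S * (lM * c^2 / 2) + (lM * c) * (lM * c^2 / 2) = lM^2 * c^2 * (S + c) / 2"
    by (simp add: power2_eq_square algebra_simps)
  ultimately have "lM * S * ph + (1 - exp (-d)) * (lM * c^2 / 2) \<le> lM^2 * c^2 * (S + c) / 2"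
    by linarith
  also have "\<dots> \<le> lM^2 * c^2 * T / 2"
    using T by (intro divide_right_mono mult_left_mono) auto
  also have "\<dots> \<le> exp (-d) * (kap * T * c^2)"
  proof -
    have "exp (-(1/2)) \<le> exp (-d)" using d c by simp
    hence "1 \<le> exp (-d) * exp (1/2)"
      by (metis exp_minus_inverse mult.commute mult_right_mono exp_ge_zero)
    moreover have "0 \<le> lM^2 * c^2 * T / 2" using T c S by auto
    ultimately have "lM^2 * c^2 * T / 2 \<le> (exp (-d) * exp (1/2)) * (lM^2 * c^2 * T / 2)"
      by (metis mult_right_mono mult_1)
    thus ?thesis by (simp add: kap_def algebra_simps)
  qed
  finally show ?thesis .
qed

end

context nhpp begin

lemma sigma_le: assumes "0 \<le> t" "0 \<le> s" "s \<le> L (t+c) - L t" "0 \<le> c"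
  shows "Li (L t + s) \<le> t + c"
  using Li_le_iff[of "t+c" "L t + s"] assms L_nonneg[of t] by auto

lemma int_bound:
  assumes ok: "okl (c#cs) T" and t: "0 \<le> t"
    and HV: "\<And>\<sigma>. 0 \<le> \<sigma> \<Longrightarrow> R \<sigma> \<le> ennreal (U (c#cs) T \<sigma>)"
  shows "(\<integral>\<^sup>+ s. indicator {0..<L(t+c) - L t} s * ennreal (exp (-s)) * (ennreal (Li (L t + s) - t) + R (Li (L t + s))) \<partial>lborel)
    \<le> ennreal ((1 + lM * sum_list cs) * phi c t) +
       ennreal ((c + lM * c^2 / 2 + Phi cs (t+c) + kap * T * Q (c#cs)) * (1 - exp (-(L(t+c) - L t))))"
proof -
  define d where "d = L(t+c) - L t"
  define S where "S = sum_list cs"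
  define B where "B = c + lM * c^2 / 2 + Phi cs (t+c) + kap * T * Q (c#cs)"
  from okl_Cons[OF ok] have okc: "okl cs T" and c0: "0 < c" and T: "c + S \<le> T" unfolding S_def by auto
  have S0: "0 \<le> S" unfolding S_def using okc okl_def sum_list_nonneg_okl by blast
  have d0: "0 \<le> d" unfolding d_def using L_mono_le(1)[of t "t+c"] c0 by simp
  have kap0: "0 \<le> kap" unfolding kap_def by simp
  have T0: "0 \<le> T" using T S0 c0 by simp
  have cs0: "\<forall>x\<in>set cs. 0 \<le> x" using okc unfolding okl_def by auto
  have B0: "0 \<le> B" unfolding B_def using Phi_bounds[OF cs0, of "t+c"] c0 lM_pos kap0 T0 Q_nonneg[of "c#cs"] by simp
  let ?G = "\<lambda>s. ennreal ((1 + lM * S) * ((Li (L t + s) - t) * indicator {0..d} s)) + ennreal (B * (indicator {0..d} s * exp (-s)))"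
  have pw: "indicator {0..<d} s * ennreal (exp (-s)) * (ennreal (Li (L t + s) - t) + R (Li (L t + s))) \<le> ?G s" for s
  proof (cases "0 \<le> s \<and> s < d")
    case False
    hence "indicator {0..<d} s = (0::ennreal)" by (auto simp: indicator_def)
    thus ?thesis by simp
  next
    case True
    define \<sigma> where "\<sigma> = Li (L t + s)"
    have st: "t \<le> \<sigma>" unfolding \<sigma>_def using Li_ge t True by auto
    have sc: "\<sigma> \<le> t + c" unfolding \<sigma>_def using sigma_le[of t s c] t True c0 unfolding d_def by auto
    have "U (c#cs) T \<sigma> = c + phi c \<sigma> + Phi cs (\<sigma> + c) + kap * T * Q (c#cs)" by (simp add: U_def)
    also have "\<dots> \<le> (\<sigma> - t) * (lM * S) + B"
    proof -
      have "phi c \<sigma> \<le> lM * c^2 / 2" using phi_le c0 by simp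
      moreover have "Phi cs (\<sigma> + c) - Phi cs (t + c) \<le> lM * S * (\<sigma> - t)"
        using Phi_lip[OF cs0, of "\<sigma>+c" "t+c"] st unfolding S_def by simp
      ultimately show ?thesis unfolding B_def by (simp add: algebra_simps)
    qed
    finally have U1: "U (c#cs) T \<sigma> \<le> (\<sigma> - t) * (lM * S) + B" .
    have "R \<sigma> \<le> ennreal ((\<sigma> - t) * (lM * S) + B)"
      using HV[of \<sigma>] ennreal_leI[OF U1] Li_nonneg[of "L t + s"] unfolding \<sigma>_def by (meson order_trans)
    hence "ennreal (\<sigma> - t) + R \<sigma> \<le> ennreal (\<sigma> - t) + ennreal ((\<sigma> - t) * (lM * S) + B)"
      by (rule add_left_mono)
    also have "\<dots> = ennreal ((\<sigma> - t) + ((\<sigma> - t) * (lM * S) + B))"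
    proof -
      have "0 \<le> (\<sigma> - t) * (lM * S)" using st S0 lM_pos by simp
      thus ?thesis using st B0 by (intro ennreal_plus[symmetric]) auto
    qed
    also have "(\<sigma> - t) + ((\<sigma> - t) * (lM * S) + B) = (\<sigma> - t) * (1 + lM * S) + B"
      by (simp add: algebra_simps)
    finally have A: "ennreal (\<sigma> - t) + R \<sigma> \<le> ennreal ((\<sigma> - t) * (1 + lM * S) + B)" .
    have "indicator {0..<d} s * ennreal (exp (-s)) * (ennreal (\<sigma> - t) + R \<sigma>)
        \<le> ennreal (exp (-s)) * ennreal ((\<sigma> - t) * (1 + lM * S) + B)"
      using True A by (simp add: indicator_def mult_left_mono)
    also have "\<dots> = ennreal (exp (-s) * ((\<sigma> - t) * (1 + lM * S) + B))"
    proof -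
      have "0 \<le> (\<sigma> - t) * (1 + lM * S) + B" using st S0 B0 lM_pos by simp
      thus ?thesis by (intro ennreal_mult[symmetric]) auto
    qed
    also have "\<dots> \<le> ennreal ((1 + lM * S) * (\<sigma> - t) + B * exp (-s))"
    proof (rule ennreal_leI)
      have "exp (-s) * ((\<sigma> - t) * (1 + lM * S)) \<le> 1 * ((\<sigma> - t) * (1 + lM * S))"
        using True st S0 lM_pos by (intro mult_right_mono) auto
      thus "exp (-s) * ((\<sigma> - t) * (1 + lM * S) + B) \<le> (1 + lM * S) * (\<sigma> - t) + B * exp (-s)"
        by (simp add: algebra_simps)
    qed
    also have "\<dots> = ?G s"
      using True st S0 B0 lM_pos unfolding \<sigma>_def
      by (subst ennreal_plus[symmetric]) (auto simp: indicator_def)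
    finally show ?thesis unfolding \<sigma>_def .
  qed
  have "(\<integral>\<^sup>+ s. indicator {0..<d} s * ennreal (exp (-s)) * (ennreal (Li (L t + s) - t) + R (Li (L t + s))) \<partial>lborel)
     \<le> (\<integral>\<^sup>+ s. ?G s \<partial>lborel)"
    by (rule nn_integral_mono) (rule pw)
  also have "\<dots> = (\<integral>\<^sup>+ s. ennreal ((1 + lM * S) * ((Li (L t + s) - t) * indicator {0..d} s)) \<partial>lborel)
      + (\<integral>\<^sup>+ s. ennreal (B * (indicator {0..d} s * exp (-s))) \<partial>lborel)"
    by (rule nn_integral_add) auto
  also have "(\<integral>\<^sup>+ s. ennreal ((1 + lM * S) * ((Li (L t + s) - t) * indicator {0..d} s)) \<partial>lborel)
      = (\<integral>\<^sup>+ s. ennreal (1 + lM * S) * ennreal ((Li (L t + s) - t) * indicator {0..d} s) \<partial>lborel)"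
  proof (rule nn_integral_cong)
    fix s :: real
    have a: "0 \<le> (Li (L t + s) - t) * indicator {0..d} s"
      using Li_ge[OF t, of s] by (auto simp: indicator_def)
    have b: "0 \<le> 1 + lM * S" using S0 lM_pos by simp
    show "ennreal ((1 + lM * S) * ((Li (L t + s) - t) * indicator {0..d} s)) =
      ennreal (1 + lM * S) * ennreal ((Li (L t + s) - t) * indicator {0..d} s)" by (rule ennreal_mult[OF b a])
  qed
  also have "\<dots> = ennreal (1 + lM * S) * (\<integral>\<^sup>+ s. ennreal ((Li (L t + s) - t) * indicator {0..d} s) \<partial>lborel)"
    by (rule nn_integral_cmult) measurable
  also have "\<dots> = ennreal (1 + lM * S) * ennreal (phi c t)"
    unfolding d_def using sigma_area[OF t, of c] c0 by simp
  also have "\<dots> = ennreal ((1 + lM * S) * phi c t)"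
    by (rule ennreal_mult[symmetric]) (use S0 lM_pos phi_nonneg in auto)
  also have "(\<integral>\<^sup>+ s. ennreal (B * (indicator {0..d} s * exp (-s))) \<partial>lborel)
      = (\<integral>\<^sup>+ s. ennreal B * ennreal (indicator {0..d} s * exp (-s)) \<partial>lborel)"
    by (rule nn_integral_cong) (use B0 in \<open>simp add: ennreal_mult\<close>)
  also have "\<dots> = ennreal B * (\<integral>\<^sup>+ s. ennreal (indicator {0..d} s * exp (-s)) \<partial>lborel)"
    by (rule nn_integral_cmult) measurable
  also have "\<dots> = ennreal B * ennreal (1 - exp (-d))"
    using exp_integral[OF d0] by simp
  also have "\<dots> = ennreal (B * (1 - exp (-d)))"
    by (rule ennreal_mult[symmetric]) (use B0 d0 in auto)
  finally show ?thesis unfolding d_def S_def B_def .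
qed

lemma U_nonneg: assumes "okl cs T" "0 \<le> T" shows "0 \<le> U cs T t"
proof -
  have "\<forall>c\<in>set cs. 0 \<le> c" using assms unfolding okl_def by auto
  hence "0 \<le> Phi cs t" using Phi_bounds[of cs t] by auto
  moreover have "0 \<le> kap * T * Q cs" using Q_nonneg[of cs] assms by (simp add: kap_def)
  ultimately show ?thesis unfolding U_def by simp
qed

lemma okl_T: "okl cs T \<Longrightarrow> 0 \<le> T"
  unfolding okl_def using sum_list_nonneg_okl by fastforce

lemma cons_step_up:
  assumes ok: "okl (c#cs) T" and t: "0 \<le> t"
    and IHcs: "\<And>t'. 0 \<le> t' \<Longrightarrow> V N cs t' \<le> ennreal (U cs T t')"
    and IHN: "\<And>M \<sigma>. N = Suc M \<Longrightarrow> 0 \<le> \<sigma> \<Longrightarrow> V M (c#cs) \<sigma> \<le> ennreal (U (c#cs) T \<sigma>)"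
  shows "V N (c#cs) t \<le> ennreal (U (c#cs) T t)"
proof -
  define d where "d = L(t+c) - L t"
  define S where "S = sum_list cs"
  define P where "P = Phi cs (t+c)"
  define B where "B = c + lM * c^2 / 2 + Phi cs (t+c) + kap * T * Q (c#cs)"
  from okl_Cons[OF ok] have okc: "okl cs T" and c0: "0 < c" and lc: "lM * c \<le> 1/2" and T: "c + S \<le> T"
    unfolding S_def by auto
  have S0: "0 \<le> S" unfolding S_def using okc okl_def sum_list_nonneg_okl by blast
  have d0: "0 \<le> d" unfolding d_def using L_mono_le(1)[of t "t+c"] c0 by simp
  have d1: "d \<le> lM * c" unfolding d_def using L_mono_le(2)[of t "t+c"] c0 by simp
  have T0: "0 \<le> T" using okl_T[OF ok] .
  have kap0: "0 \<le> kap" unfolding kap_def by simp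
  have cs0: "\<forall>x\<in>set cs. 0 \<le> x" using okc unfolding okl_def by auto
  have B0: "0 \<le> B" unfolding B_def using Phi_bounds[OF cs0, of "t+c"] c0 lM_pos kap0 T0 Q_nonneg[of "c#cs"] by simp
  have ph0: "0 \<le> phi c t" by (rule phi_nonneg)
  have Ucs0: "0 \<le> U cs T (t+c)" using U_nonneg[OF okc T0] .
  let ?I = "(\<integral>\<^sup>+ s. indicator {0..<L(t+c) - L t} s * ennreal (exp (-s)) *
      (case N of 0 \<Rightarrow> 0 | Suc M \<Rightarrow> ennreal (Li (L t + s) - t) + V M (c#cs) (Li (L t + s))) \<partial>lborel)"
  have I: "?I \<le> ennreal ((1 + lM * S) * phi c t) + ennreal (B * (1 - exp (-d)))"
  proof (cases N)
    case 0 thus ?thesis by simp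
  next
    case (Suc M)
    have "?I = (\<integral>\<^sup>+ s. indicator {0..<L(t+c) - L t} s * ennreal (exp (-s)) *
      (ennreal (Li (L t + s) - t) + V M (c#cs) (Li (L t + s))) \<partial>lborel)" using Suc by simp
    also have "\<dots> \<le> ennreal ((1 + lM * S) * phi c t) + ennreal (B * (1 - exp (-d)))"
      unfolding S_def B_def d_def by (rule int_bound[OF ok t]) (rule IHN[OF Suc])
    finally show ?thesis .
  qed
  have E: "ennreal (exp (-d)) * (ennreal c + V N cs (t+c)) \<le> ennreal (exp (-d) * (c + U cs T (t+c)))"
  proof -
    have "ennreal (exp (-d)) * (ennreal c + V N cs (t+c)) \<le> ennreal (exp (-d)) * (ennreal c + ennreal (U cs T (t+c)))"
      using IHcs[of "t+c"] t c0 by (intro mult_left_mono add_left_mono) auto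
    also have "ennreal c + ennreal (U cs T (t+c)) = ennreal (c + U cs T (t+c))"
      by (rule ennreal_plus[symmetric]) (use c0 Ucs0 in auto)
    also have "ennreal (exp (-d)) * ennreal (c + U cs T (t+c)) = ennreal (exp (-d) * (c + U cs T (t+c)))"
      by (rule ennreal_mult[symmetric]) (use c0 Ucs0 in auto)
    finally show ?thesis .
  qed
  have "V N (c#cs) t = ?I + ennreal (exp (-d)) * (ennreal c + V N cs (t+c))"
    unfolding d_def using V_rec[OF t, of c N cs] c0 by simp
  also have "\<dots> \<le> ennreal ((1 + lM * S) * phi c t) + ennreal (B * (1 - exp (-d))) + ennreal (exp (-d) * (c + U cs T (t+c)))"
    using I E by (rule add_mono)
  also have "\<dots> = ennreal ((1 + lM * S) * phi c t + B * (1 - exp (-d)) + exp (-d) * (c + U cs T (t+c)))"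
  proof -
    have "0 \<le> (1 + lM * S) * phi c t" using S0 lM_pos ph0 by simp
    moreover have "0 \<le> B * (1 - exp (-d))" using B0 d0 by simp
    moreover have "0 \<le> exp (-d) * (c + U cs T (t+c))" using c0 Ucs0 by simp
    ultimately show ?thesis by (simp only: ennreal_plus)
  qed
  also have "\<dots> \<le> ennreal (U (c#cs) T t)"
  proof (rule ennreal_leI)
    have K: "lM * S * phi c t + (1 - exp (-d)) * (lM * c^2 / 2) \<le> exp (-d) * (kap * T * c^2)"
      by (rule key_up[OF c0 lc S0 T d0 d1 ph0 phi_le]) (use c0 in auto)
    have "(1 + lM * S) * phi c t + B * (1 - exp (-d)) + exp (-d) * (c + U cs T (t+c))
       = c + phi c t + Phi cs (t+c) + kap * T * Q (c#cs) +
         (lM * S * phi c t + (1 - exp (-d)) * (lM * c^2 / 2) - exp (-d) * (kap * T * c^2))"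
      unfolding B_def U_def Q_simps by algebra
    also have "\<dots> \<le> c + phi c t + Phi cs (t+c) + kap * T * Q (c#cs)" using K by simp
    also have "\<dots> = U (c#cs) T t" by (simp add: U_def)
    finally show "(1 + lM * S) * phi c t + B * (1 - exp (-d)) + exp (-d) * (c + U cs T (t+c)) \<le> U (c#cs) T t" .
  qed
  finally show ?thesis .
qed

lemma V_nil: "V N [] t = 0" unfolding V_def by simp

theorem V_upper: "okl cs T \<Longrightarrow> 0 \<le> t \<Longrightarrow> V N cs t \<le> ennreal (U cs T t)"
proof (induction N arbitrary: cs t)
  case 0
  show ?case using 0
  proof (induction cs arbitrary: t)
    case Nil thus ?case by (simp add: V_nil)
  next
    case (Cons c cs)
    show ?case
      by (rule cons_step_up[OF Cons.prems]) (use Cons.IH okl_Cons[OF Cons.prems(1)] in auto)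
  qed
next
  case (Suc M)
  show ?case using Suc.prems
  proof (induction cs arbitrary: t)
    case Nil thus ?case by (simp add: V_nil)
  next
    case (Cons c cs)
    show ?case
    proof (rule cons_step_up[OF Cons.prems])
      show "\<And>t'. 0 \<le> t' \<Longrightarrow> V (Suc M) cs t' \<le> ennreal (U cs T t')"
        using Cons.IH okl_Cons[OF Cons.prems(1)] by auto
      show "\<And>M' \<sigma>. Suc M = Suc M' \<Longrightarrow> 0 \<le> \<sigma> \<Longrightarrow> V M' (c#cs) \<sigma> \<le> ennreal (U (c#cs) T \<sigma>)"
        using Suc.IH Cons.prems(1) by auto
    qed
  qed
qed

end

lemma integrable_ind_bounded:
  fixes g :: "real \<Rightarrow> real"
  assumes "g \<in> borel_measurable borel" "\<And>s. s \<in> {a..b} \<Longrightarrow> \<bar>g s\<bar> \<le> B"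
  shows "integrable lborel (\<lambda>s. indicator {a..b} s * g s)"
proof -
  have "integrable lborel (\<lambda>s. indicator {a..b} s *\<^sub>R g s)"
    by (rule integrableI_bounded_set_indicator[where B=B]) (use assms in \<open>auto simp: emeasure_lborel_Icc_eq\<close>)
  thus ?thesis by simp
qed

context nhpp begin

definition v :: "nat \<Rightarrow> real list \<Rightarrow> real \<Rightarrow> real" where
  "v N cs t = enn2real (V N cs t)"

lemma v_meas[measurable]: "(\<lambda>t. v N cs t) \<in> borel_measurable borel"
  unfolding v_def by measurable

definition Ub :: "real list \<Rightarrow> real \<Rightarrow> real" where
  "Ub cs T = sum_list cs + lM * Q cs / 2 + kap * T * Q cs"

lemma U_le_Ub: assumes "okl cs T" shows "U cs T t \<le> Ub cs T"
proof -
  have "\<forall>c\<in>set cs. 0 \<le> c" using assms unfolding okl_def by auto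
  thus ?thesis unfolding U_def Ub_def using Phi_bounds[of cs t] by auto
qed

lemma V_eq_v: assumes "okl cs T" "0 \<le> t"
  shows "V N cs t = ennreal (v N cs t)" "0 \<le> v N cs t" "v N cs t \<le> U cs T t"
proof -
  have le: "V N cs t \<le> ennreal (U cs T t)" by (rule V_upper[OF assms])
  hence nt: "V N cs t \<noteq> \<top>" by (metis ennreal_neq_top neq_top_trans)
  thus "V N cs t = ennreal (v N cs t)" unfolding v_def using ennreal_enn2real top.not_eq_extremum by metis
  show "0 \<le> v N cs t" unfolding v_def by simp
  show "v N cs t \<le> U cs T t"
  proof -
    have "enn2real (V N cs t) \<le> enn2real (ennreal (U cs T t))" by (rule enn2real_mono[OF le]) simp
    thus ?thesis using U_nonneg[OF assms(1) okl_T[OF assms(1)]] unfolding v_def by simp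
  qed
qed

lemma real_exp_integral: fixes d :: real assumes "0 \<le> d"
  shows "integrable lborel (\<lambda>s. indicator {0..d} s * exp (-s))"
    "(LINT s|lborel. indicator {0..d} s * exp (-s)) = 1 - exp (-d)"
proof -
  show i: "integrable lborel (\<lambda>s. indicator {0..d} s * exp (-s))"
    using integrable_ind_bounded[of "\<lambda>s. exp (-s)" 0 d 1] by simp
  have "(\<integral>\<^sup>+ s. ennreal (indicator {0..d} s * exp (-s)) \<partial>lborel) = ennreal (LINT s|lborel. indicator {0..d} s * exp (-s))"
    by (rule nn_integral_eq_integral[OF i]) simp
  hence "ennreal (LINT s|lborel. indicator {0..d} s * exp (-s)) = ennreal (1 - exp (-d))"
    using exp_integral[OF assms] by simp
  moreover have "0 \<le> (LINT s|lborel. indicator {0..d} s * exp (-s))"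
    by (rule Bochner_Integration.integral_nonneg) simp
  moreover have "0 \<le> 1 - exp (-d)" using assms by simp
  ultimately show "(LINT s|lborel. indicator {0..d} s * exp (-s)) = 1 - exp (-d)"
    using ennreal_inj by blast
qed

lemma real_sigma_integral: assumes t: "0 \<le> t" and c: "0 \<le> c"
  shows "integrable lborel (\<lambda>s. (Li (L t + s) - t) * indicator {0..L(t+c) - L t} s)"
    "(LINT s|lborel. (Li (L t + s) - t) * indicator {0..L(t+c) - L t} s) = phi c t"
proof -
  show i: "integrable lborel (\<lambda>s. (Li (L t + s) - t) * indicator {0..L(t+c) - L t} s)"
  proof -
    have "integrable lborel (\<lambda>s. indicator {0..L(t+c) - L t} s * (Li (L t + s) - t))"
    proof (rule integrable_ind_bounded[where B=c])
      fix s assume s: "s \<in> {0..L(t+c) - L t}"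
      thus "\<bar>Li (L t + s) - t\<bar> \<le> c" using Li_ge[OF t, of s] sigma_le[OF t, of s c] c by auto
    qed measurable
    thus ?thesis by (simp add: mult.commute)
  qed
  have nn: "0 \<le> (Li (L t + s) - t) * indicator {0..L(t+c) - L t} s" for s
    using Li_ge[OF t, of s] by (auto simp: indicator_def)
  have "(\<integral>\<^sup>+ s. ennreal ((Li (L t + s) - t) * indicator {0..L(t+c) - L t} s) \<partial>lborel)
     = ennreal (LINT s|lborel. (Li (L t + s) - t) * indicator {0..L(t+c) - L t} s)"
    by (rule nn_integral_eq_integral[OF i]) (simp add: nn)
  hence "ennreal (LINT s|lborel. (Li (L t + s) - t) * indicator {0..L(t+c) - L t} s) = ennreal (phi c t)"
    using sigma_area[OF t c] by simp
  moreover have "0 \<le> (LINT s|lborel. (Li (L t + s) - t) * indicator {0..L(t+c) - L t} s)"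
    by (rule Bochner_Integration.integral_nonneg) (rule nn)
  ultimately show "(LINT s|lborel. (Li (L t + s) - t) * indicator {0..L(t+c) - L t} s) = phi c t"
    using phi_nonneg[of c t] ennreal_inj by blast
qed

lemma v_int: assumes ok: "okl (c#cs) T" and t: "0 \<le> t"
  shows "integrable lborel (\<lambda>s. indicator {0..L(t+c)-L t} s * (exp (-s) * (Li (L t + s) - t + v M (c#cs) (Li (L t + s)))))"
proof (rule integrable_ind_bounded[where B = "c + Ub (c#cs) T"])
  have m1: "(\<lambda>s. Li (L t + s)) \<in> borel_measurable borel" by measurable
  have "(\<lambda>s. v M (c#cs) (Li (L t + s))) \<in> borel_measurable borel"
    using measurable_compose[OF m1 v_meas] .
  thus "(\<lambda>s. exp (-s) * (Li (L t + s) - t + v M (c#cs) (Li (L t + s)))) \<in> borel_measurable borel"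
    by measurable
next
  fix s assume s: "s \<in> {0..L(t+c)-L t}"
  have c0: "0 < c" using ok unfolding okl_def by auto
  have a: "0 \<le> Li (L t + s) - t" "Li (L t + s) - t \<le> c" using Li_ge[OF t, of s] sigma_le[OF t, of s c] s c0 by auto
  have b: "0 \<le> v M (c#cs) (Li (L t + s))" "v M (c#cs) (Li (L t + s)) \<le> Ub (c#cs) T"
    using V_eq_v[OF ok Li_nonneg, of M] U_le_Ub[OF ok] order_trans by blast+
  have e: "0 < exp (-s)" "exp (-s) \<le> 1" using s by auto
  have "0 \<le> exp (-s) * (Li (L t + s) - t + v M (c#cs) (Li (L t + s)))" using a b e by simp
  moreover have "exp (-s) * (Li (L t + s) - t + v M (c#cs) (Li (L t + s))) \<le> 1 * (c + Ub (c#cs) T)"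
    using a b e by (intro mult_mono) auto
  ultimately show "\<bar>exp (-s) * (Li (L t + s) - t + v M (c#cs) (Li (L t + s)))\<bar> \<le> c + Ub (c#cs) T" by simp
qed

lemma v_rec: assumes ok: "okl (c#cs) T" and t: "0 \<le> t"
  shows "v (Suc M) (c#cs) t = (LINT s|lborel. indicator {0..L(t+c)-L t} s * (exp (-s) * (Li (L t + s) - t + v M (c#cs) (Li (L t + s)))))
     + exp (-(L(t+c)-L t)) * (c + v (Suc M) cs (t+c))"
proof -
  define d where "d = L(t+c) - L t"
  define h where "h s = indicator {0..d} s * (exp (-s) * (Li (L t + s) - t + v M (c#cs) (Li (L t + s))))" for s
  from okl_Cons[OF ok] have okc: "okl cs T" and c0: "0 < c" by auto
  have hi: "integrable lborel h" unfolding h_def d_def by (rule v_int[OF ok t])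
  have h0: "0 \<le> h s" for s
    unfolding h_def using Li_ge[OF t, of s] V_eq_v(2)[OF ok Li_nonneg, of M] by (auto simp: indicator_def)
  have I: "(\<integral>\<^sup>+ s. indicator {0..<d} s * ennreal (exp (-s)) *
      (case Suc M of 0 \<Rightarrow> 0 | Suc M \<Rightarrow> ennreal (Li (L t + s) - t) + V M (c#cs) (Li (L t + s))) \<partial>lborel)
      = (\<integral>\<^sup>+ s. ennreal (h s) \<partial>lborel)"
  proof (rule nn_integral_cong_AE)
    show "AE s in lborel. indicator {0..<d} s * ennreal (exp (-s)) *
      (case Suc M of 0 \<Rightarrow> 0 | Suc M \<Rightarrow> ennreal (Li (L t + s) - t) + V M (c#cs) (Li (L t + s))) = ennreal (h s)"
      using AE_lborel_singleton[of d]
    proof eventually_elim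
      case (elim s)
      show ?case
      proof (cases "0 \<le> s \<and> s \<le> d")
        case True
        with elim have sd: "0 \<le> s" "s < d" by auto
        have st: "0 \<le> Li (L t + s) - t" using Li_ge[OF t, of s] sd by simp
        have vv: "V M (c#cs) (Li (L t + s)) = ennreal (v M (c#cs) (Li (L t + s)))"
          using V_eq_v(1)[OF ok Li_nonneg] .
        have v0: "0 \<le> v M (c#cs) (Li (L t + s))" using V_eq_v(2)[OF ok Li_nonneg] .
        have "indicator {0..<d} s * ennreal (exp (-s)) * (ennreal (Li (L t + s) - t) + V M (c#cs) (Li (L t + s)))
            = ennreal (exp (-s)) * ennreal (Li (L t + s) - t + v M (c#cs) (Li (L t + s)))"
          using sd st v0 by (simp add: vv ennreal_plus)
        also have "\<dots> = ennreal (exp (-s) * (Li (L t + s) - t + v M (c#cs) (Li (L t + s))))"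
          by (rule ennreal_mult[symmetric]) (use st v0 in auto)
        also have "\<dots> = ennreal (h s)" unfolding h_def using True by simp
        finally show ?thesis by simp
      next
        case False
        hence "indicator {0..<d} s = (0::ennreal)" "h s = 0" unfolding h_def by (auto simp: indicator_def)
        thus ?thesis by simp
      qed
    qed
  qed
  also have "\<dots> = ennreal (LINT s|lborel. h s)"
    by (rule nn_integral_eq_integral[OF hi]) (simp add: h0)
  finally have I': "(\<integral>\<^sup>+ s. indicator {0..<d} s * ennreal (exp (-s)) *
      (case Suc M of 0 \<Rightarrow> 0 | Suc M \<Rightarrow> ennreal (Li (L t + s) - t) + V M (c#cs) (Li (L t + s))) \<partial>lborel)
      = ennreal (LINT s|lborel. h s)" .
  have Lh0: "0 \<le> (LINT s|lborel. h s)" by (rule Bochner_Integration.integral_nonneg) (rule h0)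
  have vc: "V (Suc M) cs (t+c) = ennreal (v (Suc M) cs (t+c))" "0 \<le> v (Suc M) cs (t+c)"
    using V_eq_v[OF okc, of "t+c"] t c0 by auto
  have "ennreal (v (Suc M) (c#cs) t) = V (Suc M) (c#cs) t" using V_eq_v(1)[OF ok t] by simp
  also have "\<dots> = ennreal (LINT s|lborel. h s) + ennreal (exp (-d)) * (ennreal c + ennreal (v (Suc M) cs (t+c)))"
    using V_rec[OF t, of c "Suc M" cs] c0 I' vc(1) unfolding d_def by simp
  also have "\<dots> = ennreal ((LINT s|lborel. h s) + exp (-d) * (c + v (Suc M) cs (t+c)))"
    using Lh0 vc(2) c0 by (simp add: ennreal_plus ennreal_mult)
  finally have "v (Suc M) (c#cs) t = (LINT s|lborel. h s) + exp (-d) * (c + v (Suc M) cs (t+c))"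
    using V_eq_v(2)[OF ok t] Lh0 vc(2) c0 by (subst (asm) ennreal_inj) auto
  thus ?thesis unfolding h_def d_def .
qed

end

context nhpp begin

fun Err :: "nat \<Rightarrow> real list \<Rightarrow> real" where
  "Err N [] = 0"
| "Err 0 (c#cs) = sum_list (c#cs) + lM * Q (c#cs)"
| "Err (Suc M) (c#cs) = (1 - exp (-1/2)) * Err M (c#cs) + Err (Suc M) cs"

lemma Err_nonneg: "\<forall>c\<in>set cs. 0 \<le> c \<Longrightarrow> 0 \<le> Err N cs"
proof (induction N cs rule: Err.induct)
  case (2 c cs)
  have "0 \<le> sum_list (c#cs)" using 2 by (simp add: sum_list_nonneg)
  moreover have "0 \<le> lM * Q (c#cs)" using lM_pos Q_nonneg[of "c#cs"] by simp
  ultimately show ?case by simp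
next
  case (3 M c cs)
  thus ?case by simp
qed simp

lemma key_lo:
  fixes c S T d ph :: real
  assumes c: "0 < c" "lM * c \<le> 1/2" and S: "0 \<le> S" and T: "c + S \<le> T"
    and d: "0 \<le> d" "d \<le> lM * c" and ph: "0 \<le> ph" "ph \<le> lM * c^2 / 2"
  shows "d * ph + lM * S * ph \<le> exp (-d) * (kap * T * c^2)"
proof -
  have l0: "0 \<le> lM" using lM_pos by simp
  have "lM * S * ph \<le> lM * S * (lM * c^2 / 2)"
    using ph l0 S by (intro mult_left_mono) auto
  moreover have "d * ph \<le> (lM * c) * (lM * c^2 / 2)"
    using d ph l0 c by (intro mult_mono) auto
  moreover have "lM * S * (lM * c^2 / 2) + (lM * c) * (lM * c^2 / 2) = lM^2 * c^2 * (S + c) / 2"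
    by (simp add: power2_eq_square algebra_simps)
  ultimately have "d * ph + lM * S * ph \<le> lM^2 * c^2 * (S + c) / 2" by linarith
  also have "\<dots> \<le> lM^2 * c^2 * T / 2"
    using T by (intro divide_right_mono mult_left_mono) auto
  also have "\<dots> \<le> exp (-d) * (kap * T * c^2)"
  proof -
    have "exp (-(1/2)) \<le> exp (-d)" using d c by simp
    hence "1 \<le> exp (-d) * exp (1/2)"
      by (metis exp_minus_inverse mult.commute mult_right_mono exp_ge_zero)
    moreover have "0 \<le> lM^2 * c^2 * T / 2" using T c S by auto
    ultimately have "lM^2 * c^2 * T / 2 \<le> (exp (-d) * exp (1/2)) * (lM^2 * c^2 * T / 2)"
      by (metis mult_right_mono mult_1)
    thus ?thesis by (simp add: kap_def algebra_simps)
  qed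
  finally show ?thesis .
qed

definition Lo :: "nat \<Rightarrow> real list \<Rightarrow> real \<Rightarrow> real \<Rightarrow> real" where
  "Lo N cs T t = Phi cs t - kap * T * Q cs - Err N cs"

lemma cons_step_lo:
  assumes ok: "okl (c#cs) T" and t: "0 \<le> t"
    and IHcs: "\<And>t'. 0 \<le> t' \<Longrightarrow> Lo N cs T t' \<le> v N cs t'"
    and IHN: "\<And>M \<sigma>. N = Suc M \<Longrightarrow> 0 \<le> \<sigma> \<Longrightarrow> Lo M (c#cs) T \<sigma> \<le> v M (c#cs) \<sigma>"
  shows "Lo N (c#cs) T t \<le> v N (c#cs) t"
proof -
  define d where "d = L(t+c) - L t"
  define S where "S = sum_list cs"
  from okl_Cons[OF ok] have okc: "okl cs T" and c0: "0 < c" and lc: "lM * c \<le> 1/2" and T: "c + S \<le> T"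
    unfolding S_def by auto
  have S0: "0 \<le> S" unfolding S_def using okc okl_def sum_list_nonneg_okl by blast
  have d0: "0 \<le> d" unfolding d_def using L_mono_le(1)[of t "t+c"] c0 by simp
  have d1: "d \<le> lM * c" unfolding d_def using L_mono_le(2)[of t "t+c"] c0 by simp
  have T0: "0 \<le> T" using okl_T[OF ok] .
  have kap0: "0 \<le> kap" unfolding kap_def by simp
  have cs0: "\<forall>x\<in>set cs. 0 \<le> x" using okc unfolding okl_def by auto
  have ccs0: "\<forall>x\<in>set (c#cs). 0 \<le> x" using cs0 c0 by auto
  have ph0: "0 \<le> phi c t" by (rule phi_nonneg)
  show ?thesis
  proof (cases N)
    case 0
    have "Phi (c#cs) t \<le> sum_list (c#cs) + lM * Q (c#cs) / 2" using Phi_bounds[OF ccs0] by auto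
    moreover have "0 \<le> lM * Q (c#cs)" using lM_pos Q_nonneg[of "c#cs"] by simp
    moreover have "0 \<le> kap * T * Q (c#cs)" using kap0 T0 Q_nonneg[of "c#cs"] by simp
    ultimately have "Lo N (c#cs) T t \<le> 0" unfolding Lo_def 0 by simp
    thus ?thesis using V_eq_v(2)[OF ok t, of N] by linarith
  next
    case (Suc M)
    define E1 where "E1 = Err M (c#cs)"
    define B' where "B' = c + Phi cs (t+c) - kap * T * Q (c#cs) - E1"
    have E10: "0 \<le> E1" unfolding E1_def using Err_nonneg[OF ccs0] .
    have E20: "0 \<le> Err N cs" using Err_nonneg[OF cs0] .
    let ?h = "\<lambda>s. indicator {0..d} s * (exp (-s) * (Li (L t + s) - t + v M (c#cs) (Li (L t + s))))"
    let ?j = "\<lambda>s. indicator {0..d} s * (exp (-s) * (Li (L t + s) - t))"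
    let ?k = "\<lambda>s. (Li (L t + s) - t) * indicator {0..d} s"
    let ?e = "\<lambda>s. indicator {0..d} s * exp (-s)"
    have hi: "integrable lborel ?h" unfolding d_def by (rule v_int[OF ok t])
    have ki: "integrable lborel ?k" unfolding d_def by (rule real_sigma_integral(1)[OF t]) (use c0 in auto)
    have kI: "(LINT s|lborel. ?k s) = phi c t" unfolding d_def by (rule real_sigma_integral(2)[OF t]) (use c0 in auto)
    have ei: "integrable lborel ?e" by (rule real_exp_integral(1)[OF d0])
    have eI: "(LINT s|lborel. ?e s) = 1 - exp (-d)" by (rule real_exp_integral(2)[OF d0])
    have ji: "integrable lborel ?j"
    proof (rule integrable_ind_bounded[where B=c])
      show "(\<lambda>s. exp (-s) * (Li (L t + s) - t)) \<in> borel_measurable borel" by measurable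
      fix s assume s: "s \<in> {0..d}"
      have a: "0 \<le> Li (L t + s) - t" "Li (L t + s) - t \<le> c"
        using Li_ge[OF t, of s] sigma_le[OF t, of s c] s c0 unfolding d_def by auto
      have "exp (-s) * (Li (L t + s) - t) \<le> 1 * c" using a s by (intro mult_mono) auto
      thus "\<bar>exp (-s) * (Li (L t + s) - t)\<bar> \<le> c" using a by simp
    qed
    have J: "(1 - d) * phi c t \<le> (LINT s|lborel. ?j s)"
    proof -
      have "(LINT s|lborel. (1 - d) * ?k s) \<le> (LINT s|lborel. ?j s)"
      proof (rule Bochner_Integration.integral_mono)
        show "integrable lborel (\<lambda>s. (1 - d) * ?k s)" using ki by simp
        show "integrable lborel ?j" by (rule ji)
        fix s :: real
        show "(1 - d) * ?k s \<le> ?j s"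
        proof (cases "0 \<le> s \<and> s \<le> d")
          case True
          have a: "0 \<le> Li (L t + s) - t" using Li_ge[OF t, of s] True by auto
          have "1 - d \<le> exp (-s)" using exp_ge_add_one_self[of "-s"] True by simp
          thus ?thesis using a True by (simp add: mult_right_mono)
        next
          case False
          hence "indicator {0..d} s = (0::real)" by (auto simp: indicator_def)
          thus ?thesis by simp
        qed
      qed
      thus ?thesis using kI by simp
    qed
    have pw: "?j s - lM * S * ?k s + B' * ?e s \<le> ?h s" for s
    proof (cases "0 \<le> s \<and> s \<le> d")
      case True
      define \<sigma> where "\<sigma> = Li (L t + s)"
      have st: "t \<le> \<sigma>" unfolding \<sigma>_def using Li_ge t True by auto
      have s0: "0 \<le> \<sigma>" unfolding \<sigma>_def by (rule Li_nonneg)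
      have "Lo M (c#cs) T \<sigma> \<le> v M (c#cs) \<sigma>" by (rule IHN[OF Suc s0])
      moreover have "B' - lM * S * (\<sigma> - t) \<le> Lo M (c#cs) T \<sigma>"
      proof -
        have "Phi cs (t + c) - Phi cs (\<sigma> + c) \<le> lM * S * (\<sigma> - t)"
          using Phi_lip[OF cs0, of "\<sigma>+c" "t+c"] st unfolding S_def by simp
        thus ?thesis unfolding Lo_def B'_def E1_def using phi_nonneg[of c \<sigma>] by simp
      qed
      ultimately have vb: "B' - lM * S * (\<sigma> - t) \<le> v M (c#cs) \<sigma>" by simp
      have e: "0 < exp (-s)" "exp (-s) \<le> 1" using True by auto
      have X0: "0 \<le> lM * S * (\<sigma> - t)" using S0 lM_pos st by simp
      have "exp (-s) * (B' - lM * S * (\<sigma> - t)) \<le> exp (-s) * v M (c#cs) \<sigma>"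
        using vb e by (intro mult_left_mono) auto
      moreover have "B' * exp (-s) - lM * S * (\<sigma> - t) \<le> exp (-s) * (B' - lM * S * (\<sigma> - t))"
      proof -
        have "exp (-s) * (lM * S * (\<sigma> - t)) \<le> 1 * (lM * S * (\<sigma> - t))"
          using e X0 by (intro mult_right_mono) auto
        thus ?thesis by (simp add: algebra_simps)
      qed
      ultimately have "exp (-s) * (\<sigma> - t) - lM * S * (\<sigma> - t) + B' * exp (-s) \<le> exp (-s) * (\<sigma> - t + v M (c#cs) \<sigma>)"
        by (simp add: algebra_simps)
      thus ?thesis using True unfolding \<sigma>_def by simp
    next
      case False
      hence "indicator {0..d} s = (0::real)" by (auto simp: indicator_def)
      thus ?thesis by simp
    qed
    have "(LINT s|lborel. ?j s - lM * S * ?k s + B' * ?e s) \<le> (LINT s|lborel. ?h s)"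
      by (rule Bochner_Integration.integral_mono) (use hi ji ki ei pw in auto)
    moreover have "(LINT s|lborel. ?j s - lM * S * ?k s + B' * ?e s) = (LINT s|lborel. ?j s) - lM * S * phi c t + B' * (1 - exp (-d))"
      using ji ki ei kI eI by simp
    ultimately have H: "(LINT s|lborel. ?j s) - lM * S * phi c t + B' * (1 - exp (-d)) \<le> (LINT s|lborel. ?h s)" by simp
    have vr: "v N (c#cs) t = (LINT s|lborel. ?h s) + exp (-d) * (c + v N cs (t+c))"
      unfolding Suc d_def by (rule v_rec[OF ok t])
    have IC: "Lo N cs T (t+c) \<le> v N cs (t+c)" using IHcs t c0 by simp
    have K: "d * phi c t + lM * S * phi c t \<le> exp (-d) * (kap * T * c^2)"
      by (rule key_lo[OF c0 lc S0 T d0 d1 ph0 phi_le]) (use c0 in auto)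
    have q: "(1 - exp (-d)) * E1 \<le> (1 - exp (-1/2)) * E1"
      using E10 d1 lc by (intro mult_right_mono) auto
    have q2: "exp (-d) * Err N cs \<le> Err N cs"
    proof -
      have "exp (-d) * Err N cs \<le> 1 * Err N cs" using E20 d0 by (intro mult_right_mono) auto
      thus ?thesis by simp
    qed
    have ErrS: "Err N (c#cs) = (1 - exp (-1/2)) * E1 + Err N cs" unfolding Suc E1_def by simp
    have "Lo N (c#cs) T t = c + phi c t + Phi cs (t+c) - kap * T * (c^2 + Q cs) - ((1 - exp (-1/2)) * E1 + Err N cs)"
      unfolding Lo_def ErrS by simp
    also have "\<dots> \<le> (1 - d) * phi c t - lM * S * phi c t + B' * (1 - exp (-d)) + exp (-d) * (c + (Phi cs (t+c) - kap * T * Q cs - Err N cs))"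
    proof -
      have "(1 - d) * phi c t - lM * S * phi c t + B' * (1 - exp (-d)) + exp (-d) * (c + (Phi cs (t+c) - kap * T * Q cs - Err N cs))
        = c + phi c t + Phi cs (t+c) - kap * T * (c^2 + Q cs) - ((1 - exp (-d)) * E1 + exp (-d) * Err N cs)
          + (exp (-d) * (kap * T * c^2) - (d * phi c t + lM * S * phi c t))"
        unfolding B'_def by (simp add: algebra_simps)
      thus ?thesis using K q q2 by linarith
    qed
    also have "\<dots> \<le> (LINT s|lborel. ?h s) + exp (-d) * (c + v N cs (t+c))"
    proof -
      have "exp (-d) * (c + Lo N cs T (t+c)) \<le> exp (-d) * (c + v N cs (t+c))"
        using IC by (intro mult_left_mono) auto
      moreover have "(1 - d) * phi c t - lM * S * phi c t + B' * (1 - exp (-d)) \<le> (LINT s|lborel. ?h s)"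
        using H J by linarith
      ultimately show ?thesis unfolding Lo_def by linarith
    qed
    also have "\<dots> = v N (c#cs) t" using vr by simp
    finally show ?thesis .
  qed
qed

theorem v_lower: "okl cs T \<Longrightarrow> 0 \<le> t \<Longrightarrow> Lo N cs T t \<le> v N cs t"
proof (induction N arbitrary: cs t)
  case 0
  show ?case using 0
  proof (induction cs arbitrary: t)
    case Nil thus ?case by (simp add: Lo_def v_def V_nil)
  next
    case (Cons c cs)
    show ?case
      by (rule cons_step_lo[OF Cons.prems]) (use Cons.IH okl_Cons[OF Cons.prems(1)] in auto)
  qed
next
  case (Suc M)
  show ?case using Suc.prems
  proof (induction cs arbitrary: t)
    case Nil thus ?case by (simp add: Lo_def v_def V_nil)
  next
    case (Cons c cs)
    show ?case
    proof (rule cons_step_lo[OF Cons.prems])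
      show "\<And>t'. 0 \<le> t' \<Longrightarrow> Lo (Suc M) cs T t' \<le> v (Suc M) cs t'"
        using Cons.IH okl_Cons[OF Cons.prems(1)] by auto
      show "\<And>M' \<sigma>. Suc M = Suc M' \<Longrightarrow> 0 \<le> \<sigma> \<Longrightarrow> Lo M' (c#cs) T \<sigma> \<le> v M' (c#cs) \<sigma>"
        using Suc.IH Cons.prems(1) by auto
    qed
  qed
qed

end

context nhpp begin

definition Inv :: "real set \<Rightarrow> real \<Rightarrow> real \<Rightarrow> (nat \<Rightarrow> real) \<Rightarrow> bool" where
  "Inv D t p \<omega> \<longleftrightarrow> 0 \<le> t \<and> L t \<le> p \<and> (\<forall>i. 0 \<le> \<omega> i) \<and>
     D \<inter> {t<..} = {s. t < s \<and> (\<exists>k. L s = p + (\<Sum>i<k. \<omega> i))}"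

lemma Inv_point: assumes "Inv D t p \<omega>" "s \<in> D" "t < s" shows "p \<le> L s"
proof -
  from assms have "s \<in> D \<inter> {t<..}" by auto
  then obtain k where "L s = p + (\<Sum>i<k. \<omega> i)" using assms(1) unfolding Inv_def by auto
  moreover have "0 \<le> (\<Sum>i<k. \<omega> i)" using assms(1) unfolding Inv_def by (auto intro: sum_nonneg)
  ultimately show ?thesis by simp
qed

lemma TF_fin: assumes I: "Inv D t p \<omega>" and c: "0 < c" and f: "L (t+c) \<le> p"
  shows "task_finish D t c = t + c" "Inv D (t+c) p \<omega>"
proof -
  have t0: "0 \<le> t" using I unfolding Inv_def by auto
  have free: "D \<inter> {t<..<t+c} = {}"
  proof (rule ccontr)
    assume "D \<inter> {t<..<t+c} \<noteq> {}"
    then obtain s where s: "s \<in> D" "t < s" "s < t + c" by auto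
    have "p \<le> L s" by (rule Inv_point[OF I s(1,2)])
    moreover have "L s < L (t+c)" using L_strict[of s "t+c"] s t0 by simp
    ultimately show False using f by simp
  qed
  let ?X = "{u + c | u. (u = t \<or> (u \<in> D \<and> t < u)) \<and> D \<inter> {u<..<u+c} = {}}"
  have "Inf ?X = t + c"
  proof (rule cInf_eq_minimum)
    show "t + c \<in> ?X" using free by blast
    fix x assume "x \<in> ?X" thus "t + c \<le> x" by auto
  qed
  thus "task_finish D t c = t + c" unfolding task_finish_def .
  show "Inv D (t+c) p \<omega>"
  proof -
    have "D \<inter> {t+c<..} = (D \<inter> {t<..}) \<inter> {t+c<..}" using c by auto
    also have "\<dots> = {s. t + c < s \<and> (\<exists>k. L s = p + (\<Sum>i<k. \<omega> i))}"
      using I c unfolding Inv_def by auto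
    finally show ?thesis using I f t0 c unfolding Inv_def by auto
  qed
qed

lemma Inv_shift: assumes I: "Inv D t p \<omega>" and \<sigma>: "t \<le> \<sigma>" "L \<sigma> = p"
  shows "Inv D \<sigma> (p + \<omega> 0) (\<lambda>i. \<omega> (Suc i))"
proof -
  have t0: "0 \<le> t" and om: "\<forall>i. 0 \<le> \<omega> i" using I unfolding Inv_def by auto
  have s0: "0 \<le> \<sigma>" using t0 \<sigma> by simp
  have "D \<inter> {\<sigma><..} = (D \<inter> {t<..}) \<inter> {\<sigma><..}" using \<sigma> by auto
  also have "\<dots> = {s. \<sigma> < s \<and> (\<exists>k. L s = p + (\<Sum>i<k. \<omega> i))}"
    using I \<sigma> unfolding Inv_def by auto
  also have "\<dots> = {s. \<sigma> < s \<and> (\<exists>k. L s = (p + \<omega> 0) + (\<Sum>i<k. \<omega> (Suc i)))}"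
  proof (intro Collect_cong conj_cong refl)
    fix s assume s: "\<sigma> < s"
    have Ls: "p < L s" using L_strict[OF s0 s] \<sigma> by simp
    show "(\<exists>k. L s = p + (\<Sum>i<k. \<omega> i)) \<longleftrightarrow> (\<exists>k. L s = (p + \<omega> 0) + (\<Sum>i<k. \<omega> (Suc i)))"
    proof
      assume "\<exists>k. L s = p + (\<Sum>i<k. \<omega> i)"
      then obtain k where k: "L s = p + (\<Sum>i<k. \<omega> i)" by auto
      show "\<exists>k. L s = (p + \<omega> 0) + (\<Sum>i<k. \<omega> (Suc i))"
      proof (cases k)
        case 0 thus ?thesis using k Ls by simp
      next
        case (Suc k')
        have "(\<Sum>i<Suc k'. \<omega> i) = \<omega> 0 + (\<Sum>i<k'. \<omega> (Suc i))" by (rule sum.lessThan_Suc_shift)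
        hence "L s = (p + \<omega> 0) + (\<Sum>i<k'. \<omega> (Suc i))" using k Suc by simp
        thus ?thesis by blast
      qed
    next
      assume "\<exists>k. L s = (p + \<omega> 0) + (\<Sum>i<k. \<omega> (Suc i))"
      then obtain k where k: "L s = (p + \<omega> 0) + (\<Sum>i<k. \<omega> (Suc i))" by auto
      moreover have "(\<Sum>i<Suc k. \<omega> i) = \<omega> 0 + (\<Sum>i<k. \<omega> (Suc i))" by (rule sum.lessThan_Suc_shift)
      ultimately have "L s = p + (\<Sum>i<Suc k. \<omega> i)" by simp
      thus "\<exists>k. L s = p + (\<Sum>i<k. \<omega> i)" by blast
    qed
  qed
  finally show ?thesis using s0 \<sigma> om unfolding Inv_def by auto
qed

lemma TF_restart: assumes I: "Inv D t p \<omega>" and c: "0 < c" and f: "p < L (t+c)"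
  shows "task_finish D t c = task_finish D (Li p) c" "Inv D (Li p) (p + \<omega> 0) (\<lambda>i. \<omega> (Suc i))"
    "t \<le> Li p"
proof -
  have t0: "0 \<le> t" and Lt: "L t \<le> p" using I unfolding Inv_def by auto
  have p0: "0 \<le> p" using Lt L_nonneg[of t] by simp
  define \<sigma> where "\<sigma> = Li p"
  have Ls: "L \<sigma> = p" unfolding \<sigma>_def using L_Li[OF p0] .
  have s0: "0 \<le> \<sigma>" unfolding \<sigma>_def by (rule Li_nonneg)
  have st: "t \<le> \<sigma>" using L_le_iff[OF t0 s0] Ls Lt by simp
  have sc: "\<sigma> < t + c" using L_less_iff[OF s0, of "t+c"] Ls f t0 c by simp
  show "t \<le> Li p" using st unfolding \<sigma>_def .
  show "Inv D (Li p) (p + \<omega> 0) (\<lambda>i. \<omega> (Suc i))" using Inv_shift[OF I st Ls] unfolding \<sigma>_def .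
  show "task_finish D t c = task_finish D (Li p) c"
  proof (cases "\<sigma> = t")
    case True thus ?thesis unfolding \<sigma>_def by simp
  next
    case False
    hence st': "t < \<sigma>" using st by simp
    have sD: "\<sigma> \<in> D"
    proof -
      have "\<sigma> \<in> {s. t < s \<and> (\<exists>k. L s = p + (\<Sum>i<k. \<omega> i))}"
        using st' Ls by (auto intro!: exI[of _ 0])
      thus ?thesis using I unfolding Inv_def by auto
    qed
    have eq: "((u = t \<or> (u \<in> D \<and> t < u)) \<and> D \<inter> {u<..<u+c} = {}) \<longleftrightarrow>
              ((u = \<sigma> \<or> (u \<in> D \<and> \<sigma> < u)) \<and> D \<inter> {u<..<u+c} = {})" for u
    proof
      assume a: "(u = t \<or> (u \<in> D \<and> t < u)) \<and> D \<inter> {u<..<u+c} = {}"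
      have "u \<noteq> t" using a sD st' sc by auto
      hence u: "u \<in> D" "t < u" using a by auto
      have "p \<le> L u" by (rule Inv_point[OF I u])
      hence "\<sigma> \<le> u" using L_le_iff[OF s0, of u] Ls u t0 by simp
      thus "(u = \<sigma> \<or> (u \<in> D \<and> \<sigma> < u)) \<and> D \<inter> {u<..<u+c} = {}" using a u by auto
    next
      assume a: "(u = \<sigma> \<or> (u \<in> D \<and> \<sigma> < u)) \<and> D \<inter> {u<..<u+c} = {}"
      thus "(u = t \<or> (u \<in> D \<and> t < u)) \<and> D \<inter> {u<..<u+c} = {}" using sD st' by auto
    qed
    show ?thesis unfolding task_finish_def \<sigma>_def[symmetric] eq ..
  qed
qed

lemma step_mono_Suc: "step N cs t p \<omega> \<le> step (Suc N) cs t p \<omega>"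
proof (induction N arbitrary: cs t p \<omega>)
  case 0
  show ?case
  proof (induction cs arbitrary: t p \<omega>)
    case Nil thus ?case by simp
  next
    case (Cons c cs)
    show ?case
    proof (cases "L (t+c) \<le> p")
      case True thus ?thesis using Cons.IH by (simp add: step_fin add_left_mono)
    next
      case False thus ?thesis by (simp add: step_zero)
    qed
  qed
next
  case (Suc M)
  show ?case
  proof (induction cs arbitrary: t p \<omega>)
    case Nil thus ?case by simp
  next
    case (Cons c cs)
    show ?case
    proof (cases "L (t+c) \<le> p")
      case True thus ?thesis using Cons.IH by (simp add: step_fin add_left_mono)
    next
      case False thus ?thesis using Suc.IH by (simp add: step_restart add_left_mono)
    qed
  qed
qed

lemma step_incseq: "incseq (\<lambda>N. step N cs t p \<omega>)"
  by (rule incseq_SucI) (rule step_mono_Suc)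

definition bigs :: "(nat \<Rightarrow> real) \<Rightarrow> bool" where
  "bigs \<omega> \<longleftrightarrow> (\<forall>m. \<exists>i\<ge>m. 1/2 \<le> \<omega> i)"

lemma bigs_shift: "bigs \<omega> \<Longrightarrow> bigs (\<lambda>i. \<omega> (Suc i))"
  unfolding bigs_def
proof (intro allI)
  fix m assume a: "\<forall>m. \<exists>i\<ge>m. 1/2 \<le> \<omega> i"
  then obtain i where i: "Suc m \<le> i" "1/2 \<le> \<omega> i" by blast
  then obtain j where "i = Suc j" by (cases i) auto
  thus "\<exists>i\<ge>m. 1/2 \<le> \<omega> (Suc i)" using i by auto
qed

definition Res :: "real set \<Rightarrow> real list \<Rightarrow> real \<Rightarrow> real \<Rightarrow> (nat \<Rightarrow> real) \<Rightarrow> bool" where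
  "Res D cs t p \<omega> \<longleftrightarrow> t \<le> seq_finish D t cs \<and>
     (\<exists>N0. \<forall>N\<ge>N0. step N cs t p \<omega> = ennreal (seq_finish D t cs - t))"

theorem path: assumes "\<forall>c\<in>set cs. 0 < c \<and> lM * c \<le> 1/2" "Inv D t p \<omega>" "bigs \<omega>"
  shows "Res D cs t p \<omega>"
  using assms
proof (induction cs arbitrary: t p \<omega>)
  case Nil thus ?case unfolding Res_def by simp
next
  case (Cons c cs)
  have c0: "0 < c" and lc: "lM * c \<le> 1/2" and cs: "\<forall>c\<in>set cs. 0 < c \<and> lM * c \<le> 1/2" using Cons.prems(1) by auto
  have fin: "Res D (c#cs) t p \<omega>" if I: "Inv D t p \<omega>" and b: "bigs \<omega>" and f: "L (t+c) \<le> p" for t p \<omega>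
  proof -
    have tf: "task_finish D t c = t + c" and I2: "Inv D (t+c) p \<omega>" using TF_fin[OF I c0 f] by auto
    from Cons.IH[OF cs I2 b] obtain N0 where le: "t + c \<le> seq_finish D (t+c) cs"
      and N0: "\<forall>N\<ge>N0. step N cs (t+c) p \<omega> = ennreal (seq_finish D (t+c) cs - (t+c))"
      unfolding Res_def by auto
    have sf: "seq_finish D t (c#cs) = seq_finish D (t+c) cs" using tf by simp
    have "\<forall>N\<ge>N0. step N (c#cs) t p \<omega> = ennreal (seq_finish D t (c#cs) - t)"
    proof (intro allI impI)
      fix N assume "N0 \<le> N"
      hence "step N (c#cs) t p \<omega> = ennreal c + ennreal (seq_finish D (t+c) cs - (t+c))"
        using N0 f by (simp add: step_fin)
      also have "\<dots> = ennreal (seq_finish D t (c#cs) - t)"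
        using c0 le sf by (subst ennreal_plus[symmetric]) auto
      finally show "step N (c#cs) t p \<omega> = ennreal (seq_finish D t (c#cs) - t)" .
    qed
    thus ?thesis unfolding Res_def using le sf c0 by auto
  qed
  have main: "\<And>t p \<omega>. Inv D t p \<omega> \<Longrightarrow> bigs \<omega> \<Longrightarrow> (LEAST i. 1/2 \<le> \<omega> i) = m \<Longrightarrow> Res D (c#cs) t p \<omega>" for m
  proof (induction m rule: less_induct)
    case (less m t p \<omega>)
    show ?case
    proof (cases "L (t+c) \<le> p")
      case True thus ?thesis using fin less.prems by blast
    next
      case False
      hence f: "p < L (t+c)" by simp
      define \<sigma> where "\<sigma> = Li p"
      have tf: "task_finish D t c = task_finish D \<sigma> c" and I2: "Inv D \<sigma> (p + \<omega> 0) (\<lambda>i. \<omega> (Suc i))"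
        and st: "t \<le> \<sigma>" using TF_restart[OF less.prems(1) c0 f] unfolding \<sigma>_def by auto
      have b2: "bigs (\<lambda>i. \<omega> (Suc i))" using bigs_shift[OF less.prems(2)] .
      have R2: "Res D (c#cs) \<sigma> (p + \<omega> 0) (\<lambda>i. \<omega> (Suc i))"
      proof (cases "1/2 \<le> \<omega> 0")
        case True
        have p0: "0 \<le> p" using less.prems(1) L_nonneg[of t] unfolding Inv_def by auto
        have "L (\<sigma> + c) \<le> L \<sigma> + lM * c" using L_mono_le(2)[of \<sigma> "\<sigma>+c"] c0 by simp
        also have "\<dots> \<le> p + \<omega> 0" using L_Li[OF p0] True lc unfolding \<sigma>_def by simp
        finally show ?thesis using fin[OF I2 b2] by simp
      next
        case False
        obtain n where n: "1/2 \<le> \<omega> n" using less.prems(2) unfolding bigs_def by auto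
        have "(LEAST i. 1/2 \<le> \<omega> i) = Suc (LEAST i. 1/2 \<le> \<omega> (Suc i))"
          by (rule Least_Suc[where P="\<lambda>i. 1/2 \<le> \<omega> i", OF n]) (use False in simp)
        hence "(LEAST i. 1/2 \<le> \<omega> (Suc i)) < m" using less.prems(3) by simp
        from less.IH[OF this I2 b2] show ?thesis by simp
      qed
      from R2 obtain N0 where le: "\<sigma> \<le> seq_finish D \<sigma> (c#cs)"
        and N0: "\<forall>N\<ge>N0. step N (c#cs) \<sigma> (p + \<omega> 0) (\<lambda>i. \<omega> (Suc i)) = ennreal (seq_finish D \<sigma> (c#cs) - \<sigma>)"
        unfolding Res_def by auto
      have sf: "seq_finish D t (c#cs) = seq_finish D \<sigma> (c#cs)" using tf by simp
      have "\<forall>N\<ge>Suc N0. step N (c#cs) t p \<omega> = ennreal (seq_finish D t (c#cs) - t)"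
      proof (intro allI impI)
        fix N assume N: "Suc N0 \<le> N"
        then obtain M where M: "N = Suc M" "N0 \<le> M" by (cases N) auto
        have "step N (c#cs) t p \<omega> = ennreal (\<sigma> - t) + step M (c#cs) \<sigma> (p + \<omega> 0) (\<lambda>i. \<omega> (Suc i))"
          using M f unfolding \<sigma>_def by (simp add: step_restart)
        also have "\<dots> = ennreal (\<sigma> - t) + ennreal (seq_finish D \<sigma> (c#cs) - \<sigma>)" using N0 M by simp
        also have "\<dots> = ennreal (seq_finish D t (c#cs) - t)"
          using st le sf by (subst ennreal_plus[symmetric]) auto
        finally show "step N (c#cs) t p \<omega> = ennreal (seq_finish D t (c#cs) - t)" .
      qed
      thus ?thesis unfolding Res_def using le sf st by auto
    qed
  qed
  show ?case using main[OF Cons.prems(2,3) refl] .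
qed

end

lemma AE_M1_nonneg: "AE x in M1. 0 \<le> x"
  by (subst AE_density) (auto simp: exponential_density_def)

lemma AE_nonneg: "AE w in exp_space. \<forall>i. 0 \<le> w i"
  unfolding exp_space_eq AE_all_countable
  by (intro allI ES.AE_component AE_M1_nonneg) simp

lemma M1_le_half: "emeasure M1 {..1/2} = ennreal (1 - exp (-1/2))"
  by (subst emeasure_erlang_density) (auto simp: erlang_CDF_def)

lemma AE_big_m: "AE w in exp_space. \<exists>i\<ge>m. 1/2 \<le> w i"
proof -
  define B where "B = {w \<in> space ES.S. \<forall>i\<ge>m. w i \<le> 1/2}"
  have Bm: "B \<in> sets ES.S" unfolding B_def by measurable
  define q :: real where "q = 1 - exp (-1/2)"
  have q0: "0 \<le> q" "q < 1" unfolding q_def by auto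
  have le: "measure ES.S B \<le> q ^ n" for n
  proof -
    let ?J = "{m..<m+n}"
    have sub: "B \<subseteq> prod_emb UNIV (\<lambda>_. M1) ?J (Pi\<^sub>E ?J (\<lambda>_. {..1/2}))"
      unfolding B_def by (auto simp: prod_emb_def space_PiM)
    have "emeasure ES.S B \<le> emeasure ES.S (prod_emb UNIV (\<lambda>_. M1) ?J (Pi\<^sub>E ?J (\<lambda>_. {..1/2})))"
      by (rule emeasure_mono[OF sub]) (auto intro!: sets_PiM_I)
    also have "\<dots> = (\<Prod>i\<in>?J. emeasure M1 {..1/2})"
      by (rule ES.emeasure_PiM_emb) auto
    also have "\<dots> = ennreal (q ^ n)" unfolding M1_le_half q_def using q0 by (simp add: ennreal_power q_def)
    finally show ?thesis using q0 by (simp add: ES.emeasure_eq_measure)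
  qed
  have "measure ES.S B \<le> 0"
    by (rule LIMSEQ_le_const[OF LIMSEQ_power_zero[of q]]) (use q0 le in auto)
  hence "B \<in> null_sets ES.S" using Bm by (auto simp: null_sets_def ES.emeasure_eq_measure measure_nonneg antisym)
  hence "AE w in ES.S. w \<notin> B" using AE_iff_null_sets[OF Bm] by simp
  thus ?thesis unfolding exp_space_eq
    by (rule AE_mp) (auto simp: B_def space_PiM not_le intro: less_imp_le)
qed

context nhpp begin

lemma AE_bigs: "AE w in exp_space. bigs w"
  unfolding bigs_def using AE_big_m by (subst AE_all_countable) auto

lemma Inv_init: assumes "\<forall>i. 0 \<le> w i"
  shows "Inv (disruptions lam w) 0 (w 0) (\<lambda>i. w (Suc i))"
proof -
  have sh: "(\<Sum>i\<le>k. w i) = w 0 + (\<Sum>i<k. w (Suc i))" for k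
  proof -
    have "(\<Sum>i\<le>k. w i) = (\<Sum>i<Suc k. w i)" by (simp only: lessThan_Suc_atMost)
    also have "\<dots> = w 0 + (\<Sum>i<k. w (Suc i))" by (rule sum.lessThan_Suc_shift)
    finally show ?thesis .
  qed
  have "disruptions lam w \<inter> {0<..} = {s. 0 < s \<and> (\<exists>k. L s = w 0 + (\<Sum>i<k. w (Suc i)))}"
    unfolding disruptions_def L_def[symmetric] sh by auto
  thus ?thesis using assms unfolding Inv_def by (auto simp: L_def[symmetric])
qed

lemma SUP_eventually: fixes f :: "nat \<Rightarrow> ennreal"
  assumes "incseq f" "\<forall>N\<ge>N0. f N = X" shows "(SUP N. f N) = X"
proof (rule antisym)
  show "(SUP N. f N) \<le> X"
  proof (rule SUP_least)
    fix N have "f N \<le> f (max N N0)" using assms(1) by (simp add: incseq_def)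
    thus "f N \<le> X" using assms(2) by simp
  qed
  show "X \<le> (SUP N. f N)" using assms(2) by (metis SUP_upper UNIV_I order_refl)
qed

theorem makespan_SUP: assumes cs: "\<forall>c\<in>set cs. 0 < c \<and> lM * c \<le> 1/2"
  shows "exp_makespan lam cs 0 = (SUP N. V N cs 0)"
proof -
  have "exp_makespan lam cs 0 = (\<integral>\<^sup>+ w. (SUP N. step N cs 0 (L 0 + w 0) (\<lambda>i. w (Suc i))) \<partial>exp_space)"
    unfolding exp_makespan_def
  proof (rule nn_integral_cong_AE)
    show "AE w in exp_space. ennreal (seq_finish (disruptions lam w) 0 cs - 0) = (SUP N. step N cs 0 (L 0 + w 0) (\<lambda>i. w (Suc i)))"
      using AE_nonneg AE_bigs
    proof eventually_elim
      case (elim w)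
      have "Res (disruptions lam w) cs 0 (w 0) (\<lambda>i. w (Suc i))"
        by (rule path[OF cs Inv_init[OF elim(1)] bigs_shift[OF elim(2)]])
      then obtain N0 where "\<forall>N\<ge>N0. step N cs 0 (w 0) (\<lambda>i. w (Suc i)) = ennreal (seq_finish (disruptions lam w) 0 cs - 0)"
        unfolding Res_def by auto
      from SUP_eventually[OF step_incseq this] show ?case by simp
    qed
  qed
  also have "\<dots> = (SUP N. V N cs 0)"
    unfolding V_def
  proof (rule nn_integral_monotone_convergence_SUP)
    show "incseq (\<lambda>N w. step N cs 0 (L 0 + w 0) (\<lambda>i. w (Suc i)))"
      using step_incseq by (auto simp: incseq_def le_fun_def)
    fix N
    have m: "(\<lambda>w. (0::real, L 0 + w 0, \<lambda>i. w (Suc i))) \<in> measurable exp_space BBS"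
      unfolding exp_space_def by measurable
    show "(\<lambda>w. step N cs 0 (L 0 + w 0) (\<lambda>i. w (Suc i))) \<in> borel_measurable exp_space"
      using measurable_compose[OF m step_meas[of N cs]] by simp
  qed
  finally show ?thesis .
qed

end

context nhpp begin

lemma Err_geom: assumes "\<forall>c\<in>set cs. 0 \<le> c"
  shows "\<exists>K. \<forall>N. Err N cs \<le> K * ((1 + (1 - exp (-1/2))) / 2) ^ N"
  using assms
proof (induction cs)
  case Nil thus ?case by (intro exI[of _ 0]) simp
next
  case (Cons c cs)
  define qq :: real where "qq = 1 - exp (-1/2)"
  define r :: real where "r = (1 + qq) / 2"
  have qq: "0 < qq" "qq < 1" unfolding qq_def by auto
  have r: "qq < r" "r < 1" "0 < r" unfolding r_def using qq by auto
  from Cons obtain K1 where K1: "\<forall>N. Err N cs \<le> K1 * r ^ N" unfolding r_def qq_def by auto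
  have K10: "0 \<le> K1" using K1[rule_format, of 0] Err_nonneg[of cs 0] Cons.prems by simp
  define K where "K = max (Err 0 (c#cs)) (K1 * r / (r - qq))"
  have "Err N (c#cs) \<le> K * r ^ N" for N
  proof (induction N)
    case 0 thus ?case unfolding K_def by simp
  next
    case (Suc M)
    have E0: "0 \<le> Err M (c#cs)" using Err_nonneg Cons.prems by blast
    have "Err (Suc M) (c#cs) = qq * Err M (c#cs) + Err (Suc M) cs" unfolding qq_def by simp
    also have "\<dots> \<le> qq * (K * r ^ M) + K1 * r ^ Suc M"
      using Suc.IH K1[rule_format, of "Suc M"] qq by (intro add_mono mult_left_mono) auto
    also have "\<dots> \<le> K * r ^ Suc M"
    proof -
      have "K1 * r / (r - qq) \<le> K" unfolding K_def by simp
      hence "K1 * r \<le> K * (r - qq)" using r by (simp add: field_simps)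
      hence "qq * K + K1 * r \<le> K * r" by (simp add: algebra_simps)
      hence "(qq * K + K1 * r) * r ^ M \<le> (K * r) * r ^ M" using r by (intro mult_right_mono) auto
      thus ?thesis by (simp add: algebra_simps)
    qed
    finally show ?case .
  qed
  thus ?case unfolding r_def qq_def by blast
qed

theorem makespan_upper: assumes ok: "okl cs T"
  shows "exp_makespan lam cs 0 \<le> ennreal (Phi cs 0 + kap * T * Q cs)"
proof -
  have cs: "\<forall>c\<in>set cs. 0 < c \<and> lM * c \<le> 1/2" using ok unfolding okl_def by auto
  have "(SUP N. V N cs 0) \<le> ennreal (U cs T 0)"
    by (rule SUP_least) (rule V_upper[OF ok], simp)
  thus ?thesis unfolding makespan_SUP[OF cs] U_def .
qed

theorem makespan_lower: assumes ok: "okl cs T"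
  shows "ennreal (Phi cs 0 - kap * T * Q cs) \<le> exp_makespan lam cs 0"
proof -
  have cs: "\<forall>c\<in>set cs. 0 < c \<and> lM * c \<le> 1/2" using ok unfolding okl_def by auto
  have cs0: "\<forall>c\<in>set cs. 0 \<le> c" using cs by auto
  define Mk where "Mk = exp_makespan lam cs 0"
  have up: "Mk \<le> ennreal (Phi cs 0 + kap * T * Q cs)" unfolding Mk_def by (rule makespan_upper[OF ok])
  hence nt: "Mk \<noteq> \<top>" by (metis ennreal_neq_top neq_top_trans)
  define m where "m = enn2real Mk"
  have m0: "0 \<le> m" unfolding m_def by simp
  have Mm: "Mk = ennreal m" unfolding m_def using nt ennreal_enn2real top.not_eq_extremum by metis
  have each: "Phi cs 0 - kap * T * Q cs - Err N cs \<le> m" for N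
  proof -
    have "ennreal (Lo N cs T 0) \<le> ennreal (v N cs 0)" using v_lower[OF ok, of 0 N] by (intro ennreal_leI) simp
    also have "\<dots> = V N cs 0" using V_eq_v(1)[OF ok, of 0 N] by simp
    also have "\<dots> \<le> (SUP N. V N cs 0)" by (rule SUP_upper) simp
    also have "\<dots> = ennreal m" using Mm unfolding Mk_def makespan_SUP[OF cs] .
    finally have "ennreal (Lo N cs T 0) \<le> ennreal m" .
    hence "Lo N cs T 0 \<le> m" using m0 by (cases "Lo N cs T 0 \<le> 0") (auto simp: ennreal_le_iff)
    thus ?thesis unfolding Lo_def .
  qed
  obtain K where K: "\<forall>N. Err N cs \<le> K * ((1 + (1 - exp (-1/2))) / 2) ^ N" using Err_geom[OF cs0] by auto
  define qq :: real where "qq = 1 - exp (-1/2)"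
  have qq: "0 < qq" "qq < 1" unfolding qq_def by auto
  define r :: real where "r = (1 + qq) / 2"
  have r: "0 \<le> r" "r < 1" unfolding r_def using qq by auto
  have lim: "(\<lambda>N. Phi cs 0 - kap * T * Q cs - K * r ^ N) \<longlonglongrightarrow> Phi cs 0 - kap * T * Q cs - K * 0"
    by (intro tendsto_intros LIMSEQ_power_zero) (use r in auto)
  have all: "\<forall>n\<ge>0. Phi cs 0 - kap * T * Q cs - K * r ^ n \<le> m"
  proof (intro allI impI)
    fix n :: nat
    have "Err n cs \<le> K * r ^ n" using K unfolding r_def qq_def by simp
    thus "Phi cs 0 - kap * T * Q cs - K * r ^ n \<le> m" using each[of n] by linarith
  qed
  have "Phi cs 0 - kap * T * Q cs - K * 0 \<le> m"
    by (rule LIMSEQ_le_const2[OF lim]) (use all in blast)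
  hence "Phi cs 0 - kap * T * Q cs \<le> m" by simp
  thus ?thesis using Mm unfolding Mk_def by (simp add: ennreal_leI)
qed

fun Gam :: "real list \<Rightarrow> real \<Rightarrow> real" where
  "Gam [] t = 0"
| "Gam (c#cs) t = c * L (t + c) + Gam cs (t + c)"

lemma L_int_on: "L integrable_on {a..b}"
  by (rule integrable_continuous_interval) (rule continuous_on_subset[OF L_cont], auto)

lemma phi_eq: assumes "0 \<le> c" shows "phi c t = c * L (t + c) - integral {t..t+c} L"
proof -
  have i1: "(\<lambda>u. L (t + c)) integrable_on {0..c}" by (rule integrable_continuous_interval) simp
  have i2: "(\<lambda>u. L (t + u)) integrable_on {0..c}"
    by (rule integrable_continuous_interval) (auto intro!: continuous_intros L_cont')
  have "phi c t = integral {0..c} (\<lambda>u. L (t + c)) - integral {0..c} (\<lambda>u. L (t + u))"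
    unfolding phi_def by (rule integral_diff[OF i1 i2])
  also have "integral {0..c} (\<lambda>u. L (t + c)) = c * L (t + c)" using assms by simp
  also have "integral {0..c} (\<lambda>u. L (t + u)) = integral {t..t+c} L"
    using integral_shift_Icc_real[of 0 c L t] by (simp add: comp_def add.commute)
  finally show ?thesis .
qed

lemma Phi_eq: "\<forall>c\<in>set cs. 0 \<le> c \<Longrightarrow> Phi cs t = sum_list cs + Gam cs t - integral {t..t + sum_list cs} L"
proof (induction cs arbitrary: t)
  case Nil thus ?case by simp
next
  case (Cons c cs)
  have c0: "0 \<le> c" and cs0: "\<forall>c\<in>set cs. 0 \<le> c" using Cons.prems by auto
  have S0: "0 \<le> sum_list cs" using cs0 by (simp add: sum_list_nonneg)
  have comb: "integral {t..t+c} L + integral {t+c..t+c+sum_list cs} L = integral {t..t + (c + sum_list cs)} L"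
    using Henstock_Kurzweil_Integration.integral_combine[of t "t+c" "t + (c + sum_list cs)" L] c0 S0 L_int_on
    by (simp add: add.assoc)
  show ?case using Cons.IH[OF cs0, of "t+c"] phi_eq[OF c0, of t] comb by simp
qed

lemma Gam_snoc: "Gam (xs @ [c]) t = Gam xs t + c * L (t + sum_list xs + c)"
  by (induction xs arbitrary: t) (auto simp: algebra_simps)

end

lemma sum_list_upt_map: "sum_list (map g [1..<n+1]) = (\<Sum>k=1..n. g k)"
  by (induction n) (auto simp: upt_Suc_append)

context nhpp begin

lemma Gam_upt: "Gam (map g [1..<n+1]) 0 = (\<Sum>i=1..n. g i * L (\<Sum>k=1..i. g k))"
proof (induction n)
  case 0 thus ?case by simp
next
  case (Suc n)
  have e: "map g [1..<Suc n + 1] = map g [1..<n+1] @ [g (n+1)]" by simp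
  have "Gam (map g [1..<Suc n + 1]) 0 = Gam (map g [1..<n+1]) 0 + g (n+1) * L (0 + sum_list (map g [1..<n+1]) + g (n+1))"
    unfolding e by (rule Gam_snoc)
  also have "\<dots> = (\<Sum>i=1..n. g i * L (\<Sum>k=1..i. g k)) + g (n+1) * L ((\<Sum>k=1..n. g k) + g (n+1))"
    unfolding Suc.IH sum_list_upt_map by simp
  also have "\<dots> = (\<Sum>i=1..Suc n. g i * L (\<Sum>k=1..i. g k))"
  proof -
    have "(\<Sum>k=1..Suc n. g k) = (\<Sum>k=1..n. g k) + g (Suc n)" by simp
    thus ?thesis by simp
  qed
  finally show ?case .
qed

lemma Q_upt: "Q (map g [1..<n+1]) = (\<Sum>k=1..n. (g k)^2)"
  unfolding Q_def by (induction n) (auto simp: upt_Suc_append)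

end

lemma sum_sq_le_sq_sum: assumes "\<forall>i\<in>{1..n}. 0 \<le> (a::nat \<Rightarrow> real) i"
  shows "(\<Sum>i=1..n. (a i)^2) \<le> (\<Sum>i=1..n. a i)^2"
  using assms
proof (induction n)
  case 0 thus ?case by simp
next
  case (Suc n)
  have IH: "(\<Sum>i=1..n. (a i)^2) \<le> (\<Sum>i=1..n. a i)^2" using Suc by auto
  have x: "0 \<le> a (Suc n)" using Suc.prems by auto
  have S: "0 \<le> (\<Sum>i=1..n. a i)" using Suc.prems by (auto intro: sum_nonneg)
  have "(\<Sum>i=1..Suc n. (a i)^2) = (\<Sum>i=1..n. (a i)^2) + (a (Suc n))^2" by simp
  also have "\<dots> \<le> (\<Sum>i=1..n. a i)^2 + 2 * (\<Sum>i=1..n. a i) * a (Suc n) + (a (Suc n))^2"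
  proof -
    have "0 \<le> 2 * (\<Sum>i=1..n. a i) * a (Suc n)" using S x by simp
    thus ?thesis using IH by linarith
  qed
  also have "\<dots> = (\<Sum>i=1..Suc n. a i)^2" by (simp add: power2_eq_square algebra_simps)
  finally show ?case .
qed

lemma exp_half_le: "exp (1/2::real) \<le> 7/4"
proof -
  have "exp (1/2::real) ^ 2 = exp 1" by (simp add: exp_double[symmetric])
  also have "\<dots> < 272/100" by (rule e_less_272)
  also have "\<dots> < (7/4) ^ 2" by (simp add: power2_eq_square)
  finally have "exp (1/2::real) ^ 2 < (7/4) ^ 2" .
  thus ?thesis by (rule power_less_imp_less_base[THEN less_imp_le]) simp
qed

lemma rev_sum: assumes "i \<le> n" shows "(\<Sum>k=1..i. a (n + 1 - k)) = (\<Sum>k=n+1-i..n. (a::nat \<Rightarrow> real) k)"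
  using assms
proof (induction i)
  case 0 thus ?case by simp
next
  case (Suc i)
  have "(\<Sum>k=1..Suc i. a (n + 1 - k)) = (\<Sum>k=1..i. a (n + 1 - k)) + a (n - i)" using Suc.prems by simp
  also have "\<dots> = (\<Sum>k=n+1-i..n. a k) + a (n - i)" using Suc by simp
  also have "\<dots> = (\<Sum>k=n+1-Suc i..n. a k)"
  proof -
    have "{n+1-Suc i..n} = insert (n - i) {n+1-i..n}" using Suc.prems by auto
    moreover have "n - i \<notin> {n+1-i..n}" using Suc.prems by auto
    ultimately show ?thesis by simp
  qed
  finally show ?case .
qed

context nhpp begin

lemma set_sched: "set (sched a n \<rho>) = (\<lambda>i. a (\<rho> i)) ` {1..n}"
  unfolding sched_def by auto

lemma compare:
  assumes a_pos: "\<forall>i\<in>{1..n}. 0 < a i" and a_le: "\<forall>i\<in>{1..n}. lM * a i \<le> 1/2"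
    and bs: "bij_betw \<sigma> {1..n} {1..n}" and bp: "bij_betw \<pi> {1..n} {1..n}"
    and hyp: "(\<Sum>i=1..n. a (\<sigma> i) * L (\<Sum>k=1..i. a (\<sigma> k))) + 2 * kap * (\<Sum>k=1..n. a k) * (\<Sum>k=1..n. (a k)^2)
             < (\<Sum>i=1..n. a (\<pi> i) * L (\<Sum>k=1..i. a (\<pi> k)))"
  shows "exp_makespan lam (sched a n \<sigma>) 0 < exp_makespan lam (sched a n \<pi>) 0"
proof -
  define A where "A = (\<Sum>k=1..n. a k)"
  define Qa where "Qa = (\<Sum>k=1..n. (a k)^2)"
  have facts: "okl (sched a n \<rho>) A \<and> Q (sched a n \<rho>) = Qa \<and>
      Phi (sched a n \<rho>) 0 = A + (\<Sum>i=1..n. a (\<rho> i) * L (\<Sum>k=1..i. a (\<rho> k))) - integral {0..A} L"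
    if b: "bij_betw \<rho> {1..n} {1..n}" for \<rho>
  proof -
    have im: "\<rho> i \<in> {1..n}" if "i \<in> {1..n}" for i using b that by (auto simp: bij_betw_def)
    have sumA: "sum_list (sched a n \<rho>) = A"
      unfolding sched_def sum_list_upt_map A_def by (rule sum.reindex_bij_betw[OF b])
    have Qeq: "Q (sched a n \<rho>) = Qa"
      unfolding sched_def Q_upt Qa_def by (rule sum.reindex_bij_betw[OF b, where g="\<lambda>k. (a k)^2"])
    have elems: "\<forall>c\<in>set (sched a n \<rho>). 0 < c \<and> lM * c \<le> 1/2"
      unfolding set_sched using im a_pos a_le by auto
    have ok: "okl (sched a n \<rho>) A" unfolding okl_def using elems sumA by simp
    have "Phi (sched a n \<rho>) 0 = sum_list (sched a n \<rho>) + Gam (sched a n \<rho>) 0 - integral {0..0 + sum_list (sched a n \<rho>)} L"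
      by (rule Phi_eq) (use elems in auto)
    also have "\<dots> = A + (\<Sum>i=1..n. a (\<rho> i) * L (\<Sum>k=1..i. a (\<rho> k))) - integral {0..A} L"
    proof -
      have g: "Gam (sched a n \<rho>) 0 = (\<Sum>i=1..n. a (\<rho> i) * L (\<Sum>k=1..i. a (\<rho> k)))"
        unfolding sched_def by (rule Gam_upt)
      show ?thesis by (simp only: sumA g add_0_left)
    qed
    finally show ?thesis using ok Qeq by simp
  qed
  have fs: "okl (sched a n \<sigma>) A" "Q (sched a n \<sigma>) = Qa"
    "Phi (sched a n \<sigma>) 0 = A + (\<Sum>i=1..n. a (\<sigma> i) * L (\<Sum>k=1..i. a (\<sigma> k))) - integral {0..A} L"
    using facts[OF bs] by auto
  have fp: "okl (sched a n \<pi>) A" "Q (sched a n \<pi>) = Qa"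
    "Phi (sched a n \<pi>) 0 = A + (\<Sum>i=1..n. a (\<pi> i) * L (\<Sum>k=1..i. a (\<pi> k))) - integral {0..A} L"
    using facts[OF bp] by auto
  define x where "x = Phi (sched a n \<sigma>) 0 + kap * A * Q (sched a n \<sigma>)"
  define y where "y = Phi (sched a n \<pi>) 0 - kap * A * Q (sched a n \<pi>)"
  have x0: "0 \<le> x"
  proof -
    have "\<forall>c\<in>set (sched a n \<sigma>). 0 \<le> c" using fs(1) unfolding okl_def by auto
    hence "0 \<le> Phi (sched a n \<sigma>) 0" using Phi_bounds by blast
    moreover have "0 \<le> kap * A * Q (sched a n \<sigma>)"
      using okl_T[OF fs(1)] Q_nonneg by (simp add: kap_def)
    ultimately show ?thesis unfolding x_def by simp
  qed
  have xy: "x < y" unfolding x_def y_def fs fp using hyp unfolding A_def Qa_def by simp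
  have "exp_makespan lam (sched a n \<sigma>) 0 \<le> ennreal x"
    unfolding x_def by (rule makespan_upper[OF fs(1)])
  also have "\<dots> < ennreal y" using x0 xy by (intro ennreal_lessI) auto
  also have "\<dots> \<le> exp_makespan lam (sched a n \<pi>) 0"
    unfolding y_def by (rule makespan_lower[OF fp(1)])
  finally show ?thesis .
qed

end

lemma rev_bij: "bij_betw (\<lambda>i. n + 1 - i) {1..n} {1..(n::nat)}"
  by (rule bij_betw_byWitness[where f'="\<lambda>i. n + 1 - i"]) auto

theorem theorem1:
  fixes a :: "nat \<Rightarrow> real" and n :: nat and lb :: real and f :: "real \<Rightarrow> real"
  assumes a_pos: "\<forall>i\<in>{1..n}. 0 < a i"
    and a_incr: "\<forall>i j. 1 \<le> i \<longrightarrow> i < j \<longrightarrow> j \<le> n \<longrightarrow> a i < a j"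
    and lb_pos: "0 < lb"
    and f_pos: "\<forall>t\<ge>0. 0 < f t"
    and f_diff: "f differentiable_on {0..}"
    and f_inf: "Inf (f ` {0..}) > 0"
    and f_sup: "bdd_above (f ` {0..})"
    and lb_small: "lb \<le> 1 / (2 * Sup (f ` {0..}) * a n)"
  shows
   "((\<forall>x y. 0 \<le> x \<longrightarrow> x < y \<longrightarrow> y \<le> (\<Sum>k=1..n. a k) \<longrightarrow> f y < f x) \<and>
     (\<forall>\<pi>. \<pi> permutes {1..n} \<and> \<pi> \<noteq> id \<longrightarrow>
        lb < ((\<Sum>i=1..n. a (\<pi> i) * integral {0..(\<Sum>k=1..i. a (\<pi> k))} f)
                - (\<Sum>i=1..n. a i * integral {0..(\<Sum>k=1..i. a k)} f))
             / ((Sup (f ` {0..}))\<^sup>2 * (\<Sum>k=1..n. a k) * (\<Sum>i=1..n. (a i)\<^sup>2)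
                + (Sup (f ` {0..}))\<^sup>2 * (3/4) * (\<Sum>k=1..n. a k) ^ 3))
     \<longrightarrow> (\<forall>\<pi>. \<pi> permutes {1..n} \<and> \<pi> \<noteq> id \<longrightarrow>
           exp_makespan (\<lambda>t. lb * f t) (sched a n id) 0
             < exp_makespan (\<lambda>t. lb * f t) (sched a n \<pi>) 0))
   \<and>
    ((\<forall>x y. 0 \<le> x \<longrightarrow> x < y \<longrightarrow> y \<le> (\<Sum>k=1..n. a k) \<longrightarrow> f x < f y) \<and>
     (\<forall>\<pi>. \<pi> permutes {1..n} \<and> (\<exists>i\<in>{1..n}. \<pi> i \<noteq> n + 1 - i) \<longrightarrow>
        lb < ((\<Sum>i=1..n. a (\<pi> i) * integral {0..(\<Sum>k=1..i. a (\<pi> k))} f)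
                - (\<Sum>i=1..n. a (n + 1 - i) * integral {0..(\<Sum>k=n+1-i..n. a k)} f))
             / ((Sup (f ` {0..}))\<^sup>2 * (\<Sum>k=1..n. a k) * (\<Sum>i=1..n. (a i)\<^sup>2)
                + (Sup (f ` {0..}))\<^sup>2 * (3/4) * (\<Sum>k=1..n. a k) ^ 3))
     \<longrightarrow> (\<forall>\<pi>. \<pi> permutes {1..n} \<and> (\<exists>i\<in>{1..n}. \<pi> i \<noteq> n + 1 - i) \<longrightarrow>
           exp_makespan (\<lambda>t. lb * f t) (sched a n (\<lambda>i. n + 1 - i)) 0
             < exp_makespan (\<lambda>t. lb * f t) (sched a n \<pi>) 0))"
proof -
  define fM where "fM = Sup (f ` {0..})"
  define fm where "fm = Inf (f ` {0..})"
  define A where "A = (\<Sum>k=1..n. a k)"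
  define Qa where "Qa = (\<Sum>i=1..n. (a i)\<^sup>2)"
  define Den where "Den = fM\<^sup>2 * A * Qa + fM\<^sup>2 * (3/4) * A ^ 3"
  define Gf where "Gf \<rho> = (\<Sum>i=1..n. a (\<rho> i) * integral {0..(\<Sum>k=1..i. a (\<rho> k))} f)" for \<rho> :: "nat \<Rightarrow> nat"
  have bb: "bdd_below (f ` {0..})" using f_pos by (auto intro!: bdd_belowI[of _ 0] less_imp_le)
  have fm_le: "fm \<le> f t" if "0 \<le> t" for t
    unfolding fm_def by (rule cInf_lower) (use bb that in auto)
  have f_le: "f t \<le> fM" if "0 \<le> t" for t
    unfolding fM_def by (rule cSup_upper) (use f_sup that in auto)
  have fm0: "0 < fm" using f_inf unfolding fm_def by simp
  have fM0: "0 < fM" using fm_le[of 0] f_le[of 0] fm0 by linarith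
  have fcont: "continuous_on {0..} f" using f_diff by (rule differentiable_imp_continuous_on)
  interpret N: nhpp "\<lambda>t. lb * f t" "lb * fm" "lb * fM"
  proof
    show "continuous_on {0..} (\<lambda>t. lb * f t)" using fcont by (intro continuous_intros)
    show "0 < lb * fm" using lb_pos fm0 by simp
    fix t :: real assume t: "0 \<le> t"
    show "lb * fm \<le> lb * f t" using fm_le[OF t] lb_pos by simp
    show "lb * f t \<le> lb * fM" using f_le[OF t] lb_pos by simp
  qed
  have Leq: "N.L x = lb * integral {0..x} f" for x
    unfolding N.L_def cum_int_def using integral_cmul[of "{0..x}" lb f] by simp
  have main: "exp_makespan (\<lambda>t. lb * f t) (sched a n \<sigma>) 0 < exp_makespan (\<lambda>t. lb * f t) (sched a n \<pi>) 0"
    if bs: "bij_betw \<sigma> {1..n} {1..n}" and bp: "bij_betw \<pi> {1..n} {1..n}" and n1: "1 \<le> n"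
      and h: "lb < (Gf \<pi> - Gf \<sigma>) / Den" for \<sigma> \<pi>
  proof -
    have an: "0 < a n" using a_pos n1 by auto
    have ai: "a i \<le> a n" if "i \<in> {1..n}" for i
      using a_incr that by (cases "i = n") (auto intro: less_imp_le)
    have lbn: "lb * fM * a n \<le> 1/2"
    proof -
      have "0 < 2 * fM * a n" using fM0 an by simp
      hence "lb * (2 * fM * a n) \<le> 1" using lb_small[folded fM_def] by (simp add: le_divide_eq)
      thus ?thesis by (simp add: algebra_simps)
    qed
    have a_le: "\<forall>i\<in>{1..n}. lb * fM * a i \<le> 1/2"
    proof
      fix i assume i: "i \<in> {1..n}"
      have "lb * fM * a i \<le> lb * fM * a n" using ai[OF i] lb_pos fM0 by simp
      thus "lb * fM * a i \<le> 1/2" using lbn by simp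
    qed
    have A0: "0 < A" unfolding A_def using a_pos n1 by (intro sum_pos) auto
    have Qa0: "0 \<le> Qa" unfolding Qa_def by (simp add: sum_nonneg)
    have QA: "Qa \<le> A^2" unfolding Qa_def A_def by (rule sum_sq_le_sq_sum) (use a_pos in auto)
    have Den0: "0 < Den" unfolding Den_def using fM0 A0 Qa0 by (intro add_nonneg_pos) auto
    have h2: "lb * Den < Gf \<pi> - Gf \<sigma>" using h Den0 by (simp add: pos_less_divide_eq)
    have G: "(\<Sum>i=1..n. a (\<rho> i) * N.L (\<Sum>k=1..i. a (\<rho> k))) = lb * Gf \<rho>" for \<rho>
      unfolding Gf_def Leq by (simp add: sum_distrib_left algebra_simps)
    have kap: "2 * N.kap = exp (1/2) * lb^2 * fM^2" unfolding N.kap_def by (simp add: power_mult_distrib)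
    have "2 * N.kap * A * Qa \<le> (7/4) * lb^2 * fM^2 * A * Qa"
      unfolding kap using exp_half_le A0 Qa0 by (intro mult_right_mono) auto
    also have "\<dots> \<le> lb^2 * Den"
    proof -
      have "(3/4) * (lb^2 * fM^2 * A) * Qa \<le> (3/4) * (lb^2 * fM^2 * A) * A^2"
        using QA A0 by (intro mult_left_mono) auto
      thus ?thesis unfolding Den_def by (simp add: power2_eq_square power3_eq_cube algebra_simps)
    qed
    also have "\<dots> < lb * (Gf \<pi> - Gf \<sigma>)"
    proof -
      have "lb * (lb * Den) < lb * (Gf \<pi> - Gf \<sigma>)" using h2 lb_pos by simp
      thus ?thesis by (simp add: power2_eq_square)
    qed
    finally have hyp: "lb * Gf \<sigma> + 2 * N.kap * A * Qa < lb * Gf \<pi>" by (simp add: algebra_simps)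
    show ?thesis
    proof (rule N.compare[OF _ _ bs bp])
      show "\<forall>i\<in>{1..n}. 0 < a i" using a_pos .
      show "\<forall>i\<in>{1..n}. lb * fM * a i \<le> 1/2" using a_le .
      show "(\<Sum>i=1..n. a (\<sigma> i) * N.L (\<Sum>k=1..i. a (\<sigma> k))) + 2 * N.kap * (\<Sum>k=1..n. a k) * (\<Sum>k=1..n. (a k)^2)
          < (\<Sum>i=1..n. a (\<pi> i) * N.L (\<Sum>k=1..i. a (\<pi> k)))"
        using hyp unfolding G A_def Qa_def .
    qed
  qed
  have Gid: "Gf id = (\<Sum>i=1..n. a i * integral {0..(\<Sum>k=1..i. a k)} f)" unfolding Gf_def by simp
  have Grev: "Gf (\<lambda>i. n + 1 - i) = (\<Sum>i=1..n. a (n + 1 - i) * integral {0..(\<Sum>k=n+1-i..n. a k)} f)"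
    unfolding Gf_def
    apply (rule sum.cong[OF refl])
    subgoal for i using rev_sum[of i n a] by simp
    done
  show ?thesis
  proof (intro conjI impI allI)
    fix \<pi> :: "nat \<Rightarrow> nat"
    assume H: "(\<forall>x y. 0 \<le> x \<longrightarrow> x < y \<longrightarrow> y \<le> (\<Sum>k=1..n. a k) \<longrightarrow> f y < f x) \<and>
     (\<forall>\<pi>. \<pi> permutes {1..n} \<and> \<pi> \<noteq> id \<longrightarrow>
        lb < ((\<Sum>i=1..n. a (\<pi> i) * integral {0..(\<Sum>k=1..i. a (\<pi> k))} f)
                - (\<Sum>i=1..n. a i * integral {0..(\<Sum>k=1..i. a k)} f))
             / ((Sup (f ` {0..}))\<^sup>2 * (\<Sum>k=1..n. a k) * (\<Sum>i=1..n. (a i)\<^sup>2)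
                + (Sup (f ` {0..}))\<^sup>2 * (3/4) * (\<Sum>k=1..n. a k) ^ 3))"
      and P: "\<pi> permutes {1..n} \<and> \<pi> \<noteq> id"
    have n1: "1 \<le> n"
    proof (rule ccontr)
      assume "\<not> 1 \<le> n"
      hence "{1..n} = {}" by auto
      thus False using P by simp
    qed
    note h0 = conjunct2[OF H, rule_format, OF P]
    have hh: "lb < (Gf \<pi> - Gf id) / Den"
      using h0 unfolding Den_def A_def Qa_def fM_def Gf_def id_apply .
    show "exp_makespan (\<lambda>t. lb * f t) (sched a n id) 0 < exp_makespan (\<lambda>t. lb * f t) (sched a n \<pi>) 0"
      by (rule main[OF bij_betw_id permutes_imp_bij[OF conjunct1[OF P]] n1 hh])
  next
    fix \<pi> :: "nat \<Rightarrow> nat"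
    assume H: "(\<forall>x y. 0 \<le> x \<longrightarrow> x < y \<longrightarrow> y \<le> (\<Sum>k=1..n. a k) \<longrightarrow> f x < f y) \<and>
     (\<forall>\<pi>. \<pi> permutes {1..n} \<and> (\<exists>i\<in>{1..n}. \<pi> i \<noteq> n + 1 - i) \<longrightarrow>
        lb < ((\<Sum>i=1..n. a (\<pi> i) * integral {0..(\<Sum>k=1..i. a (\<pi> k))} f)
                - (\<Sum>i=1..n. a (n + 1 - i) * integral {0..(\<Sum>k=n+1-i..n. a k)} f))
             / ((Sup (f ` {0..}))\<^sup>2 * (\<Sum>k=1..n. a k) * (\<Sum>i=1..n. (a i)\<^sup>2)
                + (Sup (f ` {0..}))\<^sup>2 * (3/4) * (\<Sum>k=1..n. a k) ^ 3))"
      and P: "\<pi> permutes {1..n} \<and> (\<exists>i\<in>{1..n}. \<pi> i \<noteq> n + 1 - i)"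
    have n1: "1 \<le> n" using P by auto
    note h0 = conjunct2[OF H, rule_format, OF P]
    have hh: "lb < (Gf \<pi> - Gf (\<lambda>i. n + 1 - i)) / Den"
      using h0 unfolding Grev unfolding Den_def A_def Qa_def fM_def Gf_def .
    show "exp_makespan (\<lambda>t. lb * f t) (sched a n (\<lambda>i. n + 1 - i)) 0 < exp_makespan (\<lambda>t. lb * f t) (sched a n \<pi>) 0"
      by (rule main[OF rev_bij permutes_imp_bij[OF conjunct1[OF P]] n1 hh])
  qed
qed


end
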